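(* Let $\mathcal X$ be an irreducible $\Gamma$-based finite-state Markov chain with state set $S\subseteq E\Gamma$, let $\mu$ be any initial distribution on $S$, let $\mathcal B$ be a closing path system for $\Gamma$, and let $\widehat{\mathcal W}_\mu=\widehat W_1,\widehat W_2,\dots$ be the $\mathcal B$-closing of the $\mathcal X$-directed non-backtracking random walk $W_n=X_1\cdots X_n$. Then (i) there is $C>0$ with $|\widehat W_n|\le n+C$ for all $n$ (so the process is tame), and (ii) for almost every trajectory, $\lim_{n\to\infty}[\eta_{\widehat w_n}]=[\nu_{\mathcal X}]$ in $\mathbb P{\rm Curr}(F_N)$, i.e. $\widehat{\mathcal W}_\mu$ is adapted to the characteristic current $\nu_{\mathcal X}$.
   Context: $F_N$ free of rank $N\ge2$; $\Gamma$ a simplicial chart (finite connected graph, vertex degrees $\ge3$, Betti number $N$, marking $F_N\cong\pi_1(\Gamma,x_0)$), $E\Gamma$ its oriented edges; a closed reduced cyclically reduced edge-path in $\Gamma$ determines via the marking a nontrivial conjugacy class of $F_N$, and for such a path $w$, $\eta_w$ is the counting current of that class. ${\rm Curr}(F_N)$: geodesic currents; $\mathbb P{\rm Curr}(F_N)$ its projectivization. For a reduced edge-path $v$, $\langle v,\eta\rangle_\Gamma$ is the $\eta$-measure of the cylinder of a lift of $v$ to $\widetilde\Gamma$. A finite-state Markov chain $\mathcal X$ (state set $S$, transition probabilities $p_{\mathcal X}$) is $\Gamma$-based if $S\subseteq E\Gamma$, $\#S\ge2$, and $p_{\mathcal X}(e,e')>0$ implies $t(e)=o(e')$, $e'\ne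 e^{-1}$; irreducible means each state reaches every other with positive probability, giving a unique stationary distribution $\mu_0$. $\mu_0[k](s_1\cdots s_k)=\mu_0(s_1)\prod_{i<k}p_{\mathcal X}(s_i,s_{i+1})$ on $S^k$, and $0$ on other reduced paths. The characteristic current $\nu_{\mathcal X}$ is the unique current with $\langle v,\nu_{\mathcal X}\rangle_\Gamma=\mu_0[k](v)+\mu_0[k](v^{-1})$ for all reduced edge-paths $v$ of length $k\ge1$. Given initial distribution $\mu$, $X_1,X_2,\dots$ is the Markov process ($X_1\sim\mu$) and $W_n=X_1\cdots X_n$ (a reduced edge-path of length $n$) is the $\mathcal X$-directed non-backtracking walk. A closing path system $\mathcal B=(\beta_{e,e'})_{e,e'\in E\Gamma}$ consists of reduced edge-paths with $e\beta_{e,e'}e'$ reduced for all $e,e'$. The $\mathcal B$-closing of a nondegenerate reduced path $\gamma$ with last edge $e$ and first edge $e'$ is $\widehat\gamma=\gamma\beta_{e,e'}$ (a closed reduced cyclically reduced path); $\widehat W_n$ is the $\mathcal B$-closing of $W_n$, and $\widehat w_n$ its value along a trajectory. $|\cdot|$ is edge-path length. *)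

theory Defs
  imports "HOL-Probability.Probability"
begin

text \<open>A finite graph is given by a finite type 'v of vertices, a finite type 'e of
oriented edges, an origin map orig and a fixed-point-free involution iv (edge reversal).\<close>

definition term_e :: "('e \<Rightarrow> 'v) \<Rightarrow> ('e \<Rightarrow> 'e) \<Rightarrow> 'e \<Rightarrow> 'v" where
  "term_e orig iv e = orig (iv e)"

text \<open>Chart: connected, all degrees at least 3, Betti number N
(Betti number = #unoriented edges - #vertices + 1).\<close>
definition chart :: "('e::finite \<Rightarrow> 'v::finite) \<Rightarrow> ('e \<Rightarrow> 'e) \<Rightarrow> nat \<Rightarrow> bool" where
  "chart orig iv N \<longleftrightarrow>
     (\<forall>e. iv (iv e) = e \<and> iv e \<noteq> e) \<and>
     (\<forall>x. card {e. orig e = x} \<ge> 3) \<and>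
     (\<forall>x y. (x, y) \<in> {(orig e, term_e orig iv e) | e. True}\<^sup>*) \<and>
     int CARD('e) = 2 * (int N - 1 + int CARD('v))"

definition reduced_path :: "('e \<Rightarrow> 'v) \<Rightarrow> ('e \<Rightarrow> 'e) \<Rightarrow> 'e list \<Rightarrow> bool" where
  "reduced_path orig iv es \<longleftrightarrow>
     (\<forall>i. Suc i < length es \<longrightarrow>
        term_e orig iv (es ! i) = orig (es ! Suc i) \<and> es ! Suc i \<noteq> iv (es ! i))"

definition inv_path :: "('e \<Rightarrow> 'e) \<Rightarrow> 'e list \<Rightarrow> 'e list" where
  "inv_path iv v = rev (map iv v)"

definition closing_path_system ::
    "('e \<Rightarrow> 'v) \<Rightarrow> ('e \<Rightarrow> 'e) \<Rightarrow> ('e \<Rightarrow> 'e \<Rightarrow> 'e list) \<Rightarrow> bool" where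
  "closing_path_system orig iv \<beta> \<longleftrightarrow>
     (\<forall>e e'. reduced_path orig iv ([e] @ \<beta> e e' @ [e']))"

definition closing :: "('e \<Rightarrow> 'e \<Rightarrow> 'e list) \<Rightarrow> 'e list \<Rightarrow> 'e list" where
  "closing \<beta> \<gamma> = \<gamma> @ \<beta> (last \<gamma>) (hd \<gamma>)"

text \<open>Gamma-based finite-state Markov chain with state set S and transition probabilities
P (only the values on S x S are meaningful).\<close>
definition gamma_based_chain ::
    "('e \<Rightarrow> 'v) \<Rightarrow> ('e \<Rightarrow> 'e) \<Rightarrow> 'e set \<Rightarrow> ('e \<Rightarrow> 'e \<Rightarrow> real) \<Rightarrow> bool" where
  "gamma_based_chain orig iv S P \<longleftrightarrow>
     finite S \<and> card S \<ge> 2 \<and>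
     (\<forall>s\<in>S. \<forall>s'\<in>S. P s s' \<ge> 0) \<and>
     (\<forall>s\<in>S. (\<Sum>s'\<in>S. P s s') = 1) \<and>
     (\<forall>s\<in>S. \<forall>s'\<in>S. P s s' > 0 \<longrightarrow> term_e orig iv s = orig s' \<and> s' \<noteq> iv s)"

definition irreducible_chain :: "'e set \<Rightarrow> ('e \<Rightarrow> 'e \<Rightarrow> real) \<Rightarrow> bool" where
  "irreducible_chain S P \<longleftrightarrow>
     (\<forall>s\<in>S. \<forall>s'\<in>S. (s, s') \<in> {(a, b). a \<in> S \<and> b \<in> S \<and> P a b > 0}\<^sup>+)"

definition is_stationary :: "'e set \<Rightarrow> ('e \<Rightarrow> 'e \<Rightarrow> real) \<Rightarrow> ('e \<Rightarrow> real) \<Rightarrow> bool" where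
  "is_stationary S P m \<longleftrightarrow>
     (\<forall>s. s \<notin> S \<longrightarrow> m s = 0) \<and> (\<forall>s\<in>S. m s \<ge> 0) \<and> (\<Sum>s\<in>S. m s) = 1 \<and>
     (\<forall>s'\<in>S. (\<Sum>s\<in>S. m s * P s s') = m s')"

text \<open>The (unique, for irreducible chains) stationary distribution mu_0.\<close>
definition stationary_dist :: "'e set \<Rightarrow> ('e \<Rightarrow> 'e \<Rightarrow> real) \<Rightarrow> 'e \<Rightarrow> real" where
  "stationary_dist S P = (THE m. is_stationary S P m)"

definition path_weight ::
    "'e set \<Rightarrow> ('e \<Rightarrow> 'e \<Rightarrow> real) \<Rightarrow> ('e \<Rightarrow> real) \<Rightarrow> 'e list \<Rightarrow> real" where
  "path_weight S P m v =
     (if v \<noteq> [] \<and> set v \<subseteq> S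
      then m (hd v) * (\<Prod>i<length v - 1. P (v ! i) (v ! Suc i)) else 0)"

text \<open>Characteristic current nu_X, given by its values <v, nu_X>_Gamma on reduced paths v.\<close>
definition char_current ::
    "('e \<Rightarrow> 'e) \<Rightarrow> 'e set \<Rightarrow> ('e \<Rightarrow> 'e \<Rightarrow> real) \<Rightarrow> 'e list \<Rightarrow> real" where
  "char_current iv S P v =
     path_weight S P (stationary_dist S P) v + path_weight S P (stationary_dist S P) (inv_path iv v)"

text \<open>Number of occurrences of v in the cyclic word w (reading cyclically, possibly
wrapping around several times).\<close>
definition cyc_occ :: "'e list \<Rightarrow> 'e list \<Rightarrow> nat" where
  "cyc_occ w v = card {i. i < length w \<and> (\<forall>j<length v. w ! ((i + j) mod length w) = v ! j)}"

text \<open>Counting current eta_w of a closed reduced cyclically reduced path w, given by its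
values <v, eta_w>_Gamma = occurrences of v plus occurrences of v^{-1} in the cyclic word w.\<close>
definition counting_current :: "('e \<Rightarrow> 'e) \<Rightarrow> 'e list \<Rightarrow> 'e list \<Rightarrow> real" where
  "counting_current iv w v = real (cyc_occ w v + cyc_occ w (inv_path iv v))"

text \<open>Convergence [f_n] -> [g] in PCurr(F_N): there are positive scalars c_n with
c_n f_n -> g in Curr(F_N), where convergence in Curr(F_N) is convergence of all
cylinder values <v, .>_Gamma for nondegenerate reduced paths v.\<close>
definition pcurr_converges ::
    "('e \<Rightarrow> 'v) \<Rightarrow> ('e \<Rightarrow> 'e) \<Rightarrow> (nat \<Rightarrow> 'e list \<Rightarrow> real) \<Rightarrow> ('e list \<Rightarrow> real) \<Rightarrow> bool" where
  "pcurr_converges orig iv f g \<longleftrightarrow>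
     (\<exists>c. (\<forall>n. c n > 0) \<and>
       (\<forall>v. v \<noteq> [] \<and> reduced_path orig iv v \<longrightarrow> (\<lambda>n. c n * f n v) \<longlonglongrightarrow> g v))"

definition walk :: "(nat \<Rightarrow> 'a \<Rightarrow> 'e) \<Rightarrow> nat \<Rightarrow> 'a \<Rightarrow> 'e list" where
  "walk X n \<omega> = map (\<lambda>i. X (Suc i) \<omega>) [0..<n]"

end

theory Submission
  imports Defs
begin


lemma sq_bracket: "n \<ge> 1 \<Longrightarrow> \<exists>q::nat. (q+1)^2 \<le> n \<and> n < (q+2)^2"
proof (induction n)
  case 0 then show ?case by simp
next
  case (Suc n)
  show ?case
  proof (cases "n = 0")
    case True then show ?thesis by (intro exI[of _ 0]) (auto simp: power2_eq_square)
  next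
    case False
    then obtain q where q: "(q+1)^2 \<le> n" "n < (q+2)^2" using Suc by auto
    show ?thesis
    proof (cases "Suc n < (q+2)^2")
      case True then show ?thesis using q by (intro exI[of _ q]) auto
    next
      case False
      then have "Suc n = (q+2)^2" using q by auto
      then show ?thesis by (intro exI[of _ "q+1"]) (auto simp: power2_eq_square)
    qed
  qed
qed

lemma det_slln:
  fixes S :: "nat \<Rightarrow> real"
  assumes inc: "\<And>n. \<bar>S (Suc n) - S n\<bar> \<le> c"
    and sub: "\<And>r. eventually (\<lambda>q. \<bar>S ((Suc q)^2)\<bar> < real ((Suc q)^2) / real (Suc r)) sequentially"
  shows "(\<lambda>n. S n / real n) \<longlonglongrightarrow> 0"
proof (rule LIMSEQ_I)
  fix e :: real assume e: "e > 0"
  have c0: "c \<ge> 0" using inc[of 0] by linarith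
  obtain r :: nat where r: "1 / real (Suc r) < e/2"
  proof -
    obtain r where "inverse (real (Suc r)) < e/2" using reals_Archimedean e by (metis half_gt_zero)
    then show ?thesis using that by (simp add: inverse_eq_divide)
  qed
  obtain Q where Q: "\<And>q. q \<ge> Q \<Longrightarrow> \<bar>S ((Suc q)^2)\<bar> < real ((Suc q)^2) / real (Suc r)"
    using sub[of r] unfolding eventually_sequentially by auto
  obtain Q' :: nat where Q': "3 * c / real (Suc Q') < e/2"
  proof -
    obtain K :: nat where "(3*c+1) / (e/2) < real K" using reals_Archimedean2 by blast
    then have "3*c+1 < real K * (e/2)" using e by (simp add: field_simps)
    then have "3 * c / real (Suc K) < e/2" using e c0 by (simp add: field_simps) 
    then show ?thesis using that by blast
  qed
  define K where "K = max Q Q'"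
  show "\<exists>no. \<forall>n\<ge>no. norm (S n / real n - 0) < e"
  proof (intro exI[of _ "(K+1)^2"] allI impI)
    fix n assume n: "n \<ge> (K+1)^2"
    then have n1: "n \<ge> 1" by (simp add: power2_eq_square)
    obtain q where q: "(q+1)^2 \<le> n" "n < (q+2)^2" using sq_bracket[OF n1] by auto
    have "(K+1)^2 < (q+2)^2" using n q by linarith
    then have "K+1 < q+2" using power_less_imp_less_base by blast
    then have qK: "q \<ge> Q" "q \<ge> Q'" unfolding K_def by auto
    have walk: "\<bar>S (m + d) - S m\<bar> \<le> c * d" for m d
    proof (induction d)
      case 0 then show ?case by simp
    next
      case (Suc d)
      have "\<bar>S (m + Suc d) - S m\<bar> \<le> \<bar>S (Suc (m + d)) - S (m+d)\<bar> + \<bar>S (m + d) - S m\<bar>" by simp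
      also have "\<dots> \<le> c + c * d" using inc[of "m+d"] Suc by linarith
      finally show ?case by (simp add: algebra_simps)
    qed
    define m where "m = (q+1)^2"
    have nm: "n = m + (n - m)" using q m_def by simp
    have dlt: "real (n - m) \<le> 2*q + 3"
    proof -
      have "(q+2)^2 = (q+1)^2 + (2*q+3)" by (simp add: power2_eq_square algebra_simps)
      then have "n - m \<le> 2*q+3" using q m_def by linarith
      then show ?thesis by (metis of_nat_le_iff of_nat_add of_nat_mult of_nat_numeral)
    qed
    have nm': "m + (n-m) = n" using q m_def by simp
    have w: "\<bar>S n - S m\<bar> \<le> c * real (n-m)" using walk[of m "n-m"] unfolding nm' .
    have "\<bar>S n\<bar> \<le> \<bar>S m\<bar> + c * (n - m)" using w by linarith
    also have "\<dots> \<le> \<bar>S m\<bar> + c * (2*q+3)" using dlt c0 by (simp add: mult_left_mono)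
    finally have Sn: "\<bar>S n\<bar> \<le> \<bar>S m\<bar> + c * (2*q+3)" .
    have Sm: "\<bar>S m\<bar> < real m / real (Suc r)" using Q[OF qK(1)] m_def by simp
    have mpos: "real m > 0" unfolding m_def by simp
    have mn: "real m \<le> real n" using q(1) unfolding m_def by (simp only: of_nat_le_iff)
    have "\<bar>S n\<bar> / real n \<le> (\<bar>S m\<bar> + c * (2*q+3)) / real m"
      using Sn mn mpos by (meson abs_ge_zero add_nonneg_nonneg c0 frac_le mult_nonneg_nonneg of_nat_0_le_iff)
    also have "\<dots> = \<bar>S m\<bar> / real m + c * (2*q+3) / real m" by (simp add: add_divide_distrib)
    also have "\<bar>S m\<bar> / real m < 1 / real (Suc r)" using Sm mpos by (simp add: field_simps)
    also have "c * (2*q+3) / real m \<le> 3 * c / real (Suc q)"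
    proof -
      have B: "real m = real (Suc q) * real (Suc q)" unfolding m_def by (simp add: power2_eq_square algebra_simps)
      have A: "c * (2*q+3) \<le> 3 * c * real (Suc q)" using c0 by (simp add: algebra_simps mult_left_mono)
      have "c * (2*q+3) / real m \<le> 3 * c * real (Suc q) / real m"
        using A mpos by (simp add: divide_right_mono)
      also have "\<dots> = 3 * c / real (Suc q)" unfolding B by simp
      finally show ?thesis .
    qed
    also have "3 * c / real (Suc q) \<le> 3 * c / real (Suc Q')" using qK c0 by (simp add: frac_le)
    finally have "\<bar>S n\<bar> / real n < e" using r Q' by linarith
    then show "norm (S n / real n - 0) < e" by simp
  qed
qed

lemma (in prob_space) mslln:
  fixes D :: "nat \<Rightarrow> 'a \<Rightarrow> real"
  assumes meas: "\<And>m. D m \<in> borel_measurable M"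
    and bnd: "\<And>m x. \<bar>D m x\<bar> \<le> c"
    and orth: "\<And>i j. i \<noteq> j \<Longrightarrow> (\<integral>x. D i x * D j x \<partial>M) = 0"
  shows "AE x in M. (\<lambda>n. (\<Sum>m<n. D m x) / real n) \<longlonglongrightarrow> 0"
proof -
  define S where "S n x = (\<Sum>m<n. D m x)" for n x
  have c0: "c \<ge> 0" using bnd[of 0] by (meson abs_ge_zero order_trans)
  have intDD: "integrable M (\<lambda>x. D i x * D j x)" for i j
  proof (rule integrable_const_bound[where B="c*c"])
    show "AE x in M. norm (D i x * D j x) \<le> c * c"
      using bnd c0 by (auto simp: abs_mult intro!: mult_mono)
  qed (use meas in auto)
  have Smeas: "S n \<in> borel_measurable M" for n unfolding S_def using meas by auto
  have S2meas: "(\<lambda>x. (S n x)^2) \<in> borel_measurable M" for n using Smeas by auto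
  have sq: "(S n x)^2 = (\<Sum>i<n. \<Sum>j<n. D i x * D j x)" for n x
    unfolding S_def power2_eq_square by (simp add: sum_product)
  have intS2: "integrable M (\<lambda>x. (S n x)^2)" for n
    unfolding sq using intDD by auto
  have ES2: "(\<integral>x. (S n x)^2 \<partial>M) \<le> c^2 * real n" for n
  proof -
    have "(\<integral>x. (S n x)^2 \<partial>M) = (\<Sum>i<n. \<Sum>j<n. (\<integral>x. D i x * D j x \<partial>M))"
      unfolding sq using intDD by (simp add: Bochner_Integration.integral_sum)
    also have "\<dots> = (\<Sum>i<n. (\<integral>x. D i x * D i x \<partial>M))"
    proof (rule sum.cong[OF refl])
      fix i assume i: "i \<in> {..<n}"
      have "(\<Sum>j<n. (\<integral>x. D i x * D j x \<partial>M)) = (\<Sum>j<n. if j = i then (\<integral>x. D i x * D i x \<partial>M) else 0)"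
        using orth by (intro sum.cong) auto
      also have "\<dots> = (\<integral>x. D i x * D i x \<partial>M)" using i by simp
      finally show "(\<Sum>j<n. (\<integral>x. D i x * D j x \<partial>M)) = (\<integral>x. D i x * D i x \<partial>M)" .
    qed
    also have "\<dots> \<le> (\<Sum>i<n. c^2)"
    proof (rule sum_mono)
      fix i
      have pt: "D i x * D i x \<le> c^2" for x
      proof -
        have "D i x * D i x = \<bar>D i x\<bar> * \<bar>D i x\<bar>" by (simp add: abs_mult[symmetric])
        also have "\<dots> \<le> c * c" using bnd[of i x] by (intro mult_mono) auto
        finally show ?thesis by (simp add: power2_eq_square)
      qed
      have "(\<integral>x. D i x * D i x \<partial>M) \<le> (\<integral>x. c^2 \<partial>M)"
        using intDD pt by (intro integral_mono) auto
      then show "(\<integral>x. D i x * D i x \<partial>M) \<le> c^2" by (simp add: prob_space)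
    qed
    finally show ?thesis by (simp add: mult.commute)
  qed
  have sub: "AE x in M. eventually (\<lambda>q. \<bar>S ((Suc q)^2) x\<bar> < real ((Suc q)^2) / real (Suc r)) sequentially" for r
  proof -
    define b where "b q = real ((Suc q)^2) / real (Suc r)" for q
    define A where "A q = {x\<in>space M. (S ((Suc q)^2) x)^2 \<ge> (b q)^2}" for q
    have bpos: "b q > 0" for q unfolding b_def by simp
    have Asets: "A q \<in> sets M" for q unfolding A_def using S2meas by measurable
    have Ale: "measure M (A q) \<le> (c^2 * real (Suc r)^2) * (1 / (real q + 1)^2)" for q
    proof -
      have "measure M (A q) \<le> (\<integral>x. (S ((Suc q)^2) x)^2 \<partial>M) / (b q)^2"
        unfolding A_def
        by (rule integral_Markov_inequality_measure[OF intS2 Asets[of q, unfolded A_def]]) (use bpos[of q] in auto)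
      also have "\<dots> \<le> c^2 * real ((Suc q)^2) / (b q)^2"
        by (rule divide_right_mono[OF ES2]) simp
      also have "\<dots> = (c^2 * real (Suc r)^2) * (1 / (real q + 1)^2)"
      proof -
        have gen: "c^2 * a^2 / (a^2 / R)^2 = (c^2 * R^2) * (1 / a^2)" if "a > 0" "R > 0" for a R :: real
          using that by (simp add: field_simps power2_eq_square)
        have "real ((Suc q)^2) = (real q + 1)^2" by simp
        then show ?thesis unfolding b_def using gen[of "real q + 1" "real (Suc r)"] by (simp add: add.commute)
      qed
      finally show ?thesis .
    qed
    have summ: "summable (\<lambda>q. measure M (A q))"
    proof (rule summable_comparison_test'[where N=0])
      show "summable (\<lambda>n. c\<^sup>2 * (real (Suc r))\<^sup>2 * (1 / (real n + 1)\<^sup>2))"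
        using summable_mult[OF sums_summable[OF inverse_squares_sums], of "c\<^sup>2 * (real (Suc r))\<^sup>2"] by (simp add: add.commute)
      show "norm (measure M (A n)) \<le> c\<^sup>2 * (real (Suc r))\<^sup>2 * (1 / (real n + 1)\<^sup>2)" for n
        using Ale[of n] by simp
    qed
    have "AE x in M. eventually (\<lambda>q. x \<in> space M - A q) sequentially"
      by (rule borel_cantelli_AE1) (use Asets summ in \<open>auto simp: less_top[symmetric]\<close>)
    then show ?thesis
    proof (rule AE_mp, intro AE_I2 impI)
      fix x assume x: "x \<in> space M" and ev: "eventually (\<lambda>q. x \<in> space M - A q) sequentially"
      show "eventually (\<lambda>q. \<bar>S ((Suc q)^2) x\<bar> < real ((Suc q)^2) / real (Suc r)) sequentially"
      proof (rule eventually_mono[OF ev])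
        fix q assume "x \<in> space M - A q"
        then have "(S ((Suc q)^2) x)^2 < (b q)^2" using x unfolding A_def by auto
        then have "\<bar>S ((Suc q)^2) x\<bar> < b q" using bpos by (metis abs_of_pos power2_abs power_less_imp_less_base abs_ge_zero less_imp_le)
        then show "\<bar>S ((Suc q)^2) x\<bar> < real ((Suc q)^2) / real (Suc r)" unfolding b_def .
      qed
    qed
  qed
  then have "AE x in M. \<forall>r. eventually (\<lambda>q. \<bar>S ((Suc q)^2) x\<bar> < real ((Suc q)^2) / real (Suc r)) sequentially"
    by (simp add: AE_all_countable)
  then show ?thesis
  proof (rule AE_mp, intro AE_I2 impI)
    fix x assume "\<forall>r. eventually (\<lambda>q. \<bar>S ((Suc q)^2) x\<bar> < real ((Suc q)^2) / real (Suc r)) sequentially"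
    moreover have "\<bar>S (Suc n) x - S n x\<bar> \<le> c" for n unfolding S_def using bnd by simp
    ultimately have "(\<lambda>n. S n x / real n) \<longlonglongrightarrow> 0" using det_slln[of "\<lambda>n. S n x" c] by blast
    then show "(\<lambda>n. (\<Sum>m<n. D m x) / real n) \<longlonglongrightarrow> 0" unfolding S_def .
  qed
qed


locale mc =
  fixes S :: "'e set" and P :: "'e \<Rightarrow> 'e \<Rightarrow> real"
  assumes finS: "finite S" and neS: "S \<noteq> {}"
    and Pnn: "\<And>s t. s \<in> S \<Longrightarrow> t \<in> S \<Longrightarrow> P s t \<ge> 0"
    and Prow: "\<And>s. s \<in> S \<Longrightarrow> (\<Sum>t\<in>S. P s t) = 1"
    and irr: "\<And>s t. s \<in> S \<Longrightarrow> t \<in> S \<Longrightarrow> (s, t) \<in> {(a, b). a \<in> S \<and> b \<in> S \<and> P a b > 0}\<^sup>+"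
begin

definition Qop :: "('e \<Rightarrow> real) \<Rightarrow> 'e \<Rightarrow> real" where
  "Qop f s = (f s + (\<Sum>t\<in>S. P s t * f t)) / 2"

definition T :: "nat \<Rightarrow> ('e \<Rightarrow> real) \<Rightarrow> 'e \<Rightarrow> real" where
  "T n = Qop ^^ n"

definition ind :: "'e \<Rightarrow> 'e \<Rightarrow> real" where
  "ind u t = (if t = u then 1 else 0)"

definition K :: "nat \<Rightarrow> 'e \<Rightarrow> 'e \<Rightarrow> real" where
  "K n s u = T n (ind u) s"

lemma T0[simp]: "T 0 f = f" by (simp add: T_def)
lemma TSuc: "T (Suc n) f = Qop (T n f)" by (simp add: T_def)
lemma TSuc': "T (Suc n) f = T n (Qop f)" unfolding T_def funpow_Suc_right by simp
lemma Tadd: "T (m + n) f = T m (T n f)" by (simp add: T_def funpow_add)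

lemma Qop_le: assumes "\<And>t. t \<in> S \<Longrightarrow> f t \<le> b" "s \<in> S" shows "Qop f s \<le> b"
proof -
  have "(\<Sum>t\<in>S. P s t * f t) \<le> (\<Sum>t\<in>S. P s t * b)"
    using assms Pnn by (intro sum_mono mult_left_mono) auto
  also have "\<dots> = b" using Prow[OF assms(2)] by (simp add: sum_distrib_right[symmetric])
  finally have A: "(\<Sum>t\<in>S. P s t * f t) \<le> b" .
  show ?thesis using A assms(1)[OF assms(2)] unfolding Qop_def by (simp add: field_simps)
qed

lemma Qop_ge: assumes "\<And>t. t \<in> S \<Longrightarrow> f t \<ge> b" "s \<in> S" shows "Qop f s \<ge> b"
proof -
  have "(\<Sum>t\<in>S. P s t * f t) \<ge> (\<Sum>t\<in>S. P s t * b)"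
    using assms Pnn by (intro sum_mono mult_left_mono) auto
  moreover have "(\<Sum>t\<in>S. P s t * b) = b" using Prow[OF assms(2)] by (simp add: sum_distrib_right[symmetric])
  ultimately show ?thesis using assms(1)[OF assms(2)] unfolding Qop_def by (simp add: field_simps)
qed

lemma T_le: assumes "\<And>t. t \<in> S \<Longrightarrow> f t \<le> b" "s \<in> S" shows "T n f s \<le> b"
  using assms(2) by (induction n arbitrary: s) (auto simp: TSuc assms(1) intro!: Qop_le)

lemma T_ge: assumes "\<And>t. t \<in> S \<Longrightarrow> f t \<ge> b" "s \<in> S" shows "T n f s \<ge> b"
  using assms(2) by (induction n arbitrary: s) (auto simp: TSuc assms(1) intro!: Qop_ge)

lemma Qop_local: assumes "\<And>t. t \<in> S \<Longrightarrow> f t = g t" "s \<in> S" shows "Qop f s = Qop g s"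
  using assms unfolding Qop_def by auto

lemma T_local: assumes "\<And>t. t \<in> S \<Longrightarrow> f t = g t" "s \<in> S" shows "T n f s = T n g s"
  using assms(2) by (induction n arbitrary: s) (auto simp: TSuc assms(1) intro!: Qop_local)

lemma Qop_lin: "Qop (\<lambda>t. \<Sum>u\<in>A. a u * g u t) s = (\<Sum>u\<in>A. a u * Qop (g u) s)"
  unfolding Qop_def by (simp add: sum_distrib_left sum_divide_distrib sum.distrib algebra_simps
      sum_distrib_right[symmetric] add_divide_distrib) (simp add: sum_distrib_left sum.swap[of _ S] mult.left_commute)

lemma T_lin: "T n (\<lambda>t. \<Sum>u\<in>A. a u * g u t) = (\<lambda>s. \<Sum>u\<in>A. a u * T n (g u) s)"
proof (induction n)
  case 0 then show ?case by simp
next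
  case (Suc n) show ?case unfolding TSuc Suc.IH by (simp add: Qop_lin fun_eq_iff)
qed

lemma T_repr: assumes "s \<in> S" shows "T n f s = (\<Sum>u\<in>S. f u * K n s u)"
proof -
  have "T n f s = T n (\<lambda>t. \<Sum>u\<in>S. f u * ind u t) s"
  proof (rule T_local[OF _ assms])
    fix t assume "t \<in> S"
    have "(\<Sum>u\<in>S. f u * ind u t) = (\<Sum>u\<in>S. if u = t then f t else 0)" by (intro sum.cong) (auto simp: ind_def)
    then show "f t = (\<Sum>u\<in>S. f u * ind u t)" using finS \<open>t \<in> S\<close> by simp
  qed
  also have "\<dots> = (\<Sum>u\<in>S. f u * K n s u)" by (simp add: T_lin K_def)
  finally show ?thesis .
qed

lemma K_nn: "s \<in> S \<Longrightarrow> K n s u \<ge> 0"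
  unfolding K_def by (rule T_ge) (auto simp: ind_def)

lemma K_sum: assumes "s \<in> S" shows "(\<Sum>u\<in>S. K n s u) = 1"
proof -
  have "T n (\<lambda>_. 1) s = 1" using assms by (intro antisym T_le T_ge) auto
  then show ?thesis using T_repr[OF assms, of n "\<lambda>_. 1"] by simp
qed

lemma K_le1: assumes "s \<in> S" "u \<in> S" shows "K n s u \<le> 1"
proof -
  have "K n s u \<le> (\<Sum>u\<in>S. K n s u)"
    using assms finS K_nn by (intro member_le_sum) auto
  then show ?thesis using K_sum[OF assms(1)] by simp
qed

lemma K_mult: assumes "s \<in> S" "v \<in> S" "t \<in> S"
  shows "K (m + n) s t \<ge> K m s v * K n v t"
proof -
  have "K (m + n) s t = (\<Sum>u\<in>S. K n u t * K m s u)"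
    unfolding K_def Tadd using T_repr[OF assms(1), of m "T n (ind t)"] by (simp add: K_def)
  also have "\<dots> \<ge> K n v t * K m s v"
    using assms finS K_nn by (intro member_le_sum[where f="\<lambda>u. K n u t * K m s u"]) auto
  finally show ?thesis by (simp add: mult.commute)
qed

lemma K1: assumes "s \<in> S" "t \<in> S" shows "K 1 s t = (ind t s + P s t) / 2"
proof -
  have "K 1 s t = Qop (ind t) s" by (simp add: K_def T_def)
  also have "\<dots> = (ind t s + P s t) / 2"
    unfolding Qop_def using assms finS by (simp add: ind_def if_distrib sum.delta cong: if_cong)
  finally show ?thesis .
qed

lemma K_pos_trancl:
  assumes "(s, t) \<in> {(a, b). a \<in> S \<and> b \<in> S \<and> P a b > 0}\<^sup>+"
  shows "\<exists>n. K n s t > 0"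
  using assms
proof (induction rule: trancl_induct)
  case (base y)
  have "ind y s \<ge> 0" by (simp add: ind_def)
  then have "K 1 s y > 0" using K1[of s y] base by auto
  then show ?case by blast
next
  case (step y z)
  then obtain n where n: "K n s y > 0" by blast
  have yz: "y \<in> S" "z \<in> S" "P y z > 0" using step by auto
  have sS: "s \<in> S" using step(1) by (induction rule: trancl_induct) auto
  have "ind z y \<ge> 0" by (simp add: ind_def)
  then have "K 1 y z > 0" using K1[of y z] yz by auto
  then have "K n s y * K 1 y z > 0" using n by simp
  also have "\<dots> \<le> K (n + 1) s z" using K_mult[OF sS yz(1,2)] .
  finally show ?case by blast
qed

lemma K_lazy: assumes "s \<in> S" "t \<in> S" "K n s t > 0" "n \<le> m" shows "K m s t > 0"
  using assms(4)
proof (induction m rule: dec_induct)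
  case base then show ?case using assms by simp
next
  case (step m)
  have "K 1 s s \<ge> 1/2" using K1[OF assms(1) assms(1)] Pnn[OF assms(1) assms(1)] by (simp add: ind_def)
  then have "K 1 s s * K m s t > 0" using step by simp
  also have "\<dots> \<le> K (1 + m) s t" using K_mult[OF assms(1) assms(1) assms(2)] .
  finally show ?case by simp
qed

lemma doeblin: "\<exists>R \<delta>. R > 0 \<and> \<delta> > 0 \<and> (\<forall>s\<in>S. \<forall>t\<in>S. K R s t \<ge> \<delta>)"
proof -
  have "\<forall>p\<in>S \<times> S. \<exists>n. K n (fst p) (snd p) > 0" using K_pos_trancl irr by auto
  then obtain nf where nf: "\<And>p. p \<in> S \<times> S \<Longrightarrow> K (nf p) (fst p) (snd p) > 0" by metis
  define R where "R = Suc (Max (nf ` (S \<times> S)))"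
  have fin: "finite (S \<times> S)" using finS by simp
  have Rpos: "\<forall>s\<in>S. \<forall>t\<in>S. K R s t > 0"
  proof (intro ballI)
    fix s t assume st: "s \<in> S" "t \<in> S"
    have "nf (s, t) \<le> Max (nf ` (S \<times> S))" using fin st by (intro Max_ge) auto
    then have "nf (s,t) \<le> R" unfolding R_def by simp
    moreover have "K (nf (s,t)) s t > 0" using nf[of "(s,t)"] st by simp
    ultimately show "K R s t > 0" using K_lazy[OF st] by blast
  qed
  define \<delta> where "\<delta> = Min ((\<lambda>p. K R (fst p) (snd p)) ` (S \<times> S))"
  have "\<delta> > 0" unfolding \<delta>_def using fin neS Rpos by (subst Min_gr_iff) auto
  moreover have "\<forall>s\<in>S. \<forall>t\<in>S. K R s t \<ge> \<delta>" unfolding \<delta>_def using fin by (auto intro!: Min_le image_eqI[where x="(_, _)"])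
  ultimately show ?thesis unfolding R_def by blast
qed


definition mx :: "('e \<Rightarrow> real) \<Rightarrow> real" where "mx f = Max (f ` S)"
definition mn :: "('e \<Rightarrow> real) \<Rightarrow> real" where "mn f = Min (f ` S)"

lemma mx_ge: "s \<in> S \<Longrightarrow> f s \<le> mx f" unfolding mx_def using finS by auto
lemma mn_le: "s \<in> S \<Longrightarrow> mn f \<le> f s" unfolding mn_def using finS by auto
lemma mx_in: "\<exists>t\<in>S. f t = mx f"
proof -
  have "Max (f ` S) \<in> f ` S" using finS neS by simp
  then show ?thesis unfolding mx_def by auto
qed
lemma mn_in: "\<exists>t\<in>S. f t = mn f"
proof -
  have "Min (f ` S) \<in> f ` S" using finS neS by simp
  then show ?thesis unfolding mn_def by auto
qed
lemma mx_leI: "(\<And>s. s \<in> S \<Longrightarrow> f s \<le> b) \<Longrightarrow> mx f \<le> b" using mx_in by metis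
lemma mn_geI: "(\<And>s. s \<in> S \<Longrightarrow> f s \<ge> b) \<Longrightarrow> mn f \<ge> b" using mn_in by metis
lemma mn_le_mx: "mn f \<le> mx f" using neS mn_le mx_ge by (meson equals0I order_trans)

lemma mx_T_mono: "mx (T (k + n) f) \<le> mx (T n f)"
  unfolding Tadd by (intro mx_leI T_le mx_ge)
lemma mn_T_mono: "mn (T (k + n) f) \<ge> mn (T n f)"
  unfolding Tadd by (intro mn_geI T_ge mn_le)

lemma sum_le_single:
  assumes "finite A" "t0 \<in> A" "\<And>u. u \<in> A \<Longrightarrow> g u \<le> (0::real)"
  shows "(\<Sum>u\<in>A. g u) \<le> g t0"
proof -
  have "(\<Sum>u\<in>A. g u) = g t0 + (\<Sum>u\<in>A - {t0}. g u)" using assms by (simp add: sum.remove)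
  also have "\<dots> \<le> g t0 + 0" using assms by (intro add_left_mono sum_nonpos) auto
  finally show ?thesis by simp
qed

lemma contract:
  assumes R: "\<forall>s\<in>S. \<forall>t\<in>S. K R s t \<ge> \<delta>" and d: "\<delta> > 0"
  shows "mx (T R f) - mn (T R f) \<le> (1 - 2 * \<delta>) * (mx f - mn f)"
proof -
  obtain t0 where t0: "t0 \<in> S" "f t0 = mn f" using mn_in by blast
  obtain t1 where t1: "t1 \<in> S" "f t1 = mx f" using mx_in by blast
  have up: "T R f s \<le> mx f - \<delta> * (mx f - mn f)" if s: "s \<in> S" for s
  proof -
    have "T R f s = (\<Sum>u\<in>S. (f u - mx f) * K R s u) + mx f * (\<Sum>u\<in>S. K R s u)"
      unfolding T_repr[OF s] by (simp add: algebra_simps sum.distrib sum_distrib_left sum_subtractf)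
    also have "\<dots> = (\<Sum>u\<in>S. (f u - mx f) * K R s u) + mx f" using K_sum[OF s] by simp
    also have "(\<Sum>u\<in>S. (f u - mx f) * K R s u) \<le> (f t0 - mx f) * K R s t0"
      using finS t0 mx_ge K_nn[OF s] by (intro sum_le_single) (auto simp: mult_nonpos_nonneg)
    also have "\<dots> \<le> (f t0 - mx f) * \<delta>"
      using R s t0 mn_le_mx[of f] by (intro mult_left_mono_neg) auto
    finally show ?thesis using t0 by (simp add: algebra_simps)
  qed
  have lo: "T R f s \<ge> mn f + \<delta> * (mx f - mn f)" if s: "s \<in> S" for s
  proof -
    have "T R f s = (\<Sum>u\<in>S. (f u - mn f) * K R s u) + mn f * (\<Sum>u\<in>S. K R s u)"
      unfolding T_repr[OF s] by (simp add: algebra_simps sum.distrib sum_distrib_left sum_subtractf)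
    also have "\<dots> = (\<Sum>u\<in>S. (f u - mn f) * K R s u) + mn f" using K_sum[OF s] by simp
    finally have eq: "T R f s = (\<Sum>u\<in>S. (f u - mn f) * K R s u) + mn f" .
    have "(\<Sum>u\<in>S. (mn f - f u) * K R s u) \<le> (mn f - f t1) * K R s t1"
      using finS t1 mn_le K_nn[OF s] by (intro sum_le_single) (auto simp: mult_nonpos_nonneg)
    also have "\<dots> \<le> (mn f - f t1) * \<delta>"
      using R s t1 mn_le_mx[of f] by (intro mult_left_mono_neg) auto
    finally have "(\<Sum>u\<in>S. (mn f - f u) * K R s u) \<le> (mn f - f t1) * \<delta>" .
    moreover have "(\<Sum>u\<in>S. (mn f - f u) * K R s u) = - (\<Sum>u\<in>S. (f u - mn f) * K R s u)"
      by (simp add: sum_negf[symmetric] algebra_simps)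
    ultimately show ?thesis using eq t1 by (simp add: algebra_simps)
  qed
  have "mx (T R f) \<le> mx f - \<delta> * (mx f - mn f)" by (rule mx_leI[OF up])
  moreover have "mn (T R f) \<ge> mn f + \<delta> * (mx f - mn f)" by (rule mn_geI[OF lo])
  ultimately show ?thesis by (simp add: algebra_simps)
qed

lemma osc_decay: "\<exists>\<sigma> B. 0 < \<sigma> \<and> \<sigma> < 1 \<and> B \<ge> 0 \<and> (\<forall>f n. mx (T n f) - mn (T n f) \<le> B * \<sigma>^n * (mx f - mn f))"
proof -
  obtain R \<delta> where R0: "R > 0" and d: "\<delta> > 0" and R: "\<forall>s\<in>S. \<forall>t\<in>S. K R s t \<ge> \<delta>"
    using doeblin by blast
  obtain s0 where s0: "s0 \<in> S" using neS by blast
  have d1: "\<delta> \<le> 1" using R s0 K_le1[OF s0 s0, of R] by fastforce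
  define \<rho> where "\<rho> = 1 - \<delta> / 2"
  have rho: "0 < \<rho>" "\<rho> < 1" using d d1 unfolding \<rho>_def by auto
  have osc0: "mx f - mn f \<ge> 0" for f using mn_le_mx[of f] by simp
  have step: "mx (T R f) - mn (T R f) \<le> \<rho> * (mx f - mn f)" for f
  proof -
    have "mx (T R f) - mn (T R f) \<le> (1 - 2 * \<delta>) * (mx f - mn f)" by (rule contract[OF R d])
    also have "\<dots> \<le> \<rho> * (mx f - mn f)" unfolding \<rho>_def using d osc0[of f] by (intro mult_right_mono) auto
    finally show ?thesis .
  qed
  have qR: "mx (T (q * R) f) - mn (T (q * R) f) \<le> \<rho>^q * (mx f - mn f)" for q f
  proof (induction q)
    case 0 then show ?case by simp
  next
    case (Suc q)
    have "T (Suc q * R) f = T R (T (q * R) f)" by (simp add: Tadd[symmetric])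
    then have "mx (T (Suc q * R) f) - mn (T (Suc q * R) f) \<le> \<rho> * (mx (T (q * R) f) - mn (T (q * R) f))"
      using step by simp
    also have "\<dots> \<le> \<rho> * (\<rho>^q * (mx f - mn f))" using Suc rho by (intro mult_left_mono) auto
    finally show ?case by simp
  qed
  define \<sigma> where "\<sigma> = root R \<rho>"
  have sig: "0 < \<sigma>" "\<sigma> < 1" "\<sigma> ^ R = \<rho>" unfolding \<sigma>_def using rho R0 by (auto simp: real_root_lt_1_iff)
  have bound: "\<rho> ^ (n div R) \<le> (1/\<rho>) * \<sigma>^n" for n
  proof -
    have "\<sigma>^n = \<sigma>^(R * (n div R)) * \<sigma>^(n mod R)" by (simp add: power_add[symmetric])
    also have "\<sigma>^(R * (n div R)) = \<rho> ^ (n div R)" using sig by (simp add: power_mult)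
    also have "\<sigma>^(n mod R) \<ge> \<sigma>^R" using sig R0 by (intro power_decreasing) auto
    then have "\<rho> ^ (n div R) * \<sigma>^(n mod R) \<ge> \<rho> ^ (n div R) * \<rho>" using sig rho by (intro mult_left_mono) auto
    finally have "\<rho> ^ (n div R) * \<rho> \<le> \<sigma>^n" by simp
    then show ?thesis using rho by (simp add: field_simps)
  qed
  have "mx (T n f) - mn (T n f) \<le> (1/\<rho>) * \<sigma>^n * (mx f - mn f)" for f n
  proof -
    have nn: "n = n mod R + (n div R) * R" by simp
    have "mx (T n f) - mn (T n f) \<le> mx (T ((n div R) * R) f) - mn (T ((n div R) * R) f)"
      using mx_T_mono[where k="n mod R" and n="(n div R) * R" and f=f] mn_T_mono[where k="n mod R" and n="(n div R) * R" and f=f]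
      by (subst (1 2) nn) linarith
    also have "\<dots> \<le> \<rho> ^ (n div R) * (mx f - mn f)" by (rule qR)
    also have "\<dots> \<le> (1/\<rho>) * \<sigma>^n * (mx f - mn f)" using bound osc0 by (intro mult_right_mono) auto
    finally show ?thesis .
  qed
  then show ?thesis using sig rho by (intro exI[of _ \<sigma>] exI[of _ "1/\<rho>"]) auto
qed


definition cf :: "('e \<Rightarrow> real) \<Rightarrow> real" where "cf f = (INF n. mx (T n f))"

lemma cf_bounds: "mn (T n f) \<le> cf f" "cf f \<le> mx (T n f)"
proof -
  have bdd: "bdd_below (range (\<lambda>n. mx (T n f)))"
  proof (rule bdd_belowI2)
    fix k
    have "mn f \<le> mn (T (k + 0) f)" using mn_T_mono[where k=k and n=0 and f=f] by simp
    also have "\<dots> \<le> mx (T k f)" using mn_le_mx by simp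
    finally show "mn f \<le> mx (T k f)" .
  qed
  show "cf f \<le> mx (T n f)" unfolding cf_def by (rule cINF_lower[OF bdd]) simp
  show "mn (T n f) \<le> cf f" unfolding cf_def
  proof (rule cINF_greatest)
    fix k assume "k \<in> (UNIV :: nat set)"
    show "mn (T n f) \<le> mx (T k f)"
    proof (cases "n \<le> k")
      case True
      then have "mn (T n f) \<le> mn (T ((k - n) + n) f)" using mn_T_mono by blast
      also have "\<dots> = mn (T k f)" using True by simp
      finally show ?thesis using mn_le_mx[of "T k f"] by simp
    next
      case False
      then have "mx (T ((n - k) + k) f) \<le> mx (T k f)" using mx_T_mono by blast
      moreover have "(n - k) + k = n" using False by simp
      ultimately show ?thesis using mn_le_mx[of "T n f"] by simp
    qed
  qed simp
qed

lemma T_close: assumes "s \<in> S" shows "\<bar>T n f s - cf f\<bar> \<le> mx (T n f) - mn (T n f)"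
  using cf_bounds[where n=n and f=f] mx_ge[OF assms, of "T n f"] mn_le[OF assms, of "T n f"] by linarith

lemma T_conv: assumes "s \<in> S" shows "(\<lambda>n. T n f s) \<longlonglongrightarrow> cf f"
proof -
  obtain \<sigma> B where sig: "0 < \<sigma>" "\<sigma> < 1" "B \<ge> 0"
    and dec: "\<And>f n. mx (T n f) - mn (T n f) \<le> B * \<sigma>^n * (mx f - mn f)"
    using osc_decay by blast
  have "(\<lambda>n. T n f s - cf f) \<longlonglongrightarrow> 0"
  proof (rule Lim_null_comparison)
    show "\<forall>\<^sub>F n in sequentially. norm (T n f s - cf f) \<le> B * \<sigma>^n * (mx f - mn f)"
    proof (intro always_eventually allI)
      fix n show "norm (T n f s - cf f) \<le> B * \<sigma>^n * (mx f - mn f)"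
        using order_trans[OF T_close[OF assms] dec] by simp
    qed
    have "(\<lambda>n. B * \<sigma>^n * (mx f - mn f)) \<longlonglongrightarrow> B * 0 * (mx f - mn f)"
      using sig by (intro tendsto_intros LIMSEQ_power_zero) auto
    then show "(\<lambda>n. B * \<sigma>^n * (mx f - mn f)) \<longlonglongrightarrow> 0" by simp
  qed
  from tendsto_add[OF this tendsto_const[of "cf f"]] show ?thesis by simp
qed

definition pi :: "'e \<Rightarrow> real" where "pi t = (if t \<in> S then cf (ind t) else 0)"

lemma cf_lin: "cf f = (\<Sum>u\<in>S. f u * pi u)"
proof -
  obtain s0 where s0: "s0 \<in> S" using neS by blast
  have "(\<lambda>n. T n f s0) \<longlonglongrightarrow> cf f" by (rule T_conv[OF s0])
  moreover have "(\<lambda>n. T n f s0) \<longlonglongrightarrow> (\<Sum>u\<in>S. f u * pi u)"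
  proof -
    have "(\<lambda>n. \<Sum>u\<in>S. f u * K n s0 u) \<longlonglongrightarrow> (\<Sum>u\<in>S. f u * cf (ind u))"
      unfolding K_def by (intro tendsto_sum tendsto_mult_left T_conv[OF s0])
    moreover have "(\<Sum>u\<in>S. f u * cf (ind u)) = (\<Sum>u\<in>S. f u * pi u)" by (simp add: pi_def)
    ultimately show ?thesis using T_repr[OF s0] by simp
  qed
  ultimately show ?thesis using LIMSEQ_unique by blast
qed

lemma cf_const: "cf (\<lambda>_. a) = a"
proof -
  obtain s0 where s0: "s0 \<in> S" using neS by blast
  have "T n (\<lambda>_. a) s0 = a" for n using s0 by (intro antisym T_le T_ge) auto
  then have "(\<lambda>n. T n (\<lambda>_. a) s0) \<longlonglongrightarrow> a" by simp
  then show ?thesis using T_conv[OF s0] LIMSEQ_unique by blast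
qed

lemma cf_Qop: "cf (Qop f) = cf f"
proof -
  obtain s0 where s0: "s0 \<in> S" using neS by blast
  have "(\<lambda>n. T (Suc n) f s0) \<longlonglongrightarrow> cf f" using LIMSEQ_Suc[OF T_conv[OF s0]] .
  then have "(\<lambda>n. T n (Qop f) s0) \<longlonglongrightarrow> cf f" by (simp add: TSuc')
  then show ?thesis using T_conv[OF s0] LIMSEQ_unique by blast
qed

lemma pi_nn: "pi t \<ge> 0"
proof (cases "t \<in> S")
  case True
  obtain s0 where s0: "s0 \<in> S" using neS by blast
  have "cf (ind t) \<ge> 0"
    by (rule LIMSEQ_le_const[OF T_conv[OF s0]]) (auto intro!: T_ge simp: s0 ind_def)
  then show ?thesis using True by (simp add: pi_def)
qed (simp add: pi_def)

lemma pi_sum: "(\<Sum>u\<in>S. pi u) = 1"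
  using cf_lin[of "\<lambda>_. 1"] cf_const[of 1] by simp

lemma pi_stat: assumes "t \<in> S" shows "(\<Sum>u\<in>S. pi u * P u t) = pi t"
proof -
  have "cf (Qop (ind t)) = (\<Sum>u\<in>S. Qop (ind t) u * pi u)" by (rule cf_lin)
  also have "\<dots> = (\<Sum>u\<in>S. ((ind t u + P u t) / 2) * pi u)"
    using K1[of _ t] assms by (intro sum.cong) (auto simp: K_def T_def)
  also have "\<dots> = ((\<Sum>u\<in>S. ind t u * pi u) + (\<Sum>u\<in>S. pi u * P u t)) / 2"
    by (simp add: sum_divide_distrib[symmetric] algebra_simps sum.distrib)
  also have "(\<Sum>u\<in>S. ind t u * pi u) = pi t"
  proof -
    have "(\<Sum>u\<in>S. ind t u * pi u) = (\<Sum>u\<in>S. if u = t then pi t else 0)" by (intro sum.cong) (auto simp: ind_def)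
    then show ?thesis using assms finS by simp
  qed
  finally have "cf (Qop (ind t)) = (pi t + (\<Sum>u\<in>S. pi u * P u t)) / 2" .
  moreover have "cf (Qop (ind t)) = pi t" using cf_Qop assms by (simp add: pi_def)
  ultimately show ?thesis by simp
qed

lemma stat_unique:
  assumes m0: "\<And>s. s \<notin> S \<Longrightarrow> m s = 0" and msum: "(\<Sum>s\<in>S. m s) = 1"
    and mst: "\<And>t. t \<in> S \<Longrightarrow> (\<Sum>s\<in>S. m s * P s t) = m t"
  shows "m = pi"
proof -
  have mQ: "(\<Sum>u\<in>S. m u * Qop f u) = (\<Sum>u\<in>S. m u * f u)" for f
  proof -
    have "(\<Sum>u\<in>S. m u * Qop f u) = ((\<Sum>u\<in>S. m u * f u) + (\<Sum>u\<in>S. \<Sum>t\<in>S. m u * P u t * f t)) / 2"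
      unfolding Qop_def by (simp add: sum_divide_distrib[symmetric] sum_distrib_left algebra_simps sum.distrib)
    also have "(\<Sum>u\<in>S. \<Sum>t\<in>S. m u * P u t * f t) = (\<Sum>t\<in>S. (\<Sum>u\<in>S. m u * P u t) * f t)"
      by (subst sum.swap) (simp add: sum_distrib_right)
    also have "\<dots> = (\<Sum>t\<in>S. m t * f t)" using mst by simp
    finally show ?thesis by simp
  qed
  have mT: "(\<Sum>u\<in>S. m u * T n f u) = (\<Sum>u\<in>S. m u * f u)" for n f
    by (induction n) (simp_all add: TSuc mQ)
  have cfm: "(\<Sum>u\<in>S. m u * f u) = cf f" for f
  proof -
    have "(\<lambda>n. \<Sum>u\<in>S. m u * T n f u) \<longlonglongrightarrow> (\<Sum>u\<in>S. m u * cf f)"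
      by (intro tendsto_sum tendsto_mult_left T_conv) auto
    then have "(\<lambda>n. \<Sum>u\<in>S. m u * f u) \<longlonglongrightarrow> cf f" using msum by (simp add: mT sum_distrib_right[symmetric])
    then show ?thesis by (simp add: LIMSEQ_const_iff)
  qed
  show ?thesis
  proof
    fix t show "m t = pi t"
    proof (cases "t \<in> S")
      case True
      have "(\<Sum>u\<in>S. m u * ind t u) = (\<Sum>u\<in>S. if u = t then m t else 0)" by (intro sum.cong) (auto simp: ind_def)
      then have "(\<Sum>u\<in>S. m u * ind t u) = m t" using True finS by simp
      then show ?thesis using cfm[of "ind t"] True by (simp add: pi_def)
    qed (simp add: m0 pi_def)
  qed
qed

lemma poisson:
  assumes g0: "(\<Sum>u\<in>S. g u * pi u) = 0"
  shows "\<exists>H. \<forall>s\<in>S. H s - (\<Sum>t\<in>S. P s t * H t) = g s"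
proof -
  obtain \<sigma> B where sig: "0 < \<sigma>" "\<sigma> < 1" "B \<ge> 0"
    and dec: "\<And>f n. mx (T n f) - mn (T n f) \<le> B * \<sigma>^n * (mx f - mn f)"
    using osc_decay by blast
  have cg: "cf g = 0" using g0 cf_lin by simp
  have summ: "summable (\<lambda>n. T n g s)" if s: "s \<in> S" for s
  proof (rule summable_comparison_test'[where N=0])
    show "summable (\<lambda>n. (B * (mx g - mn g)) * \<sigma>^n)"
      using sig by (intro summable_mult summable_geometric) auto
    show "norm (T n g s) \<le> (B * (mx g - mn g)) * \<sigma>^n" for n
      using T_close[OF s, of n g] dec[of n g] cg by (simp add: algebra_simps)
  qed
  define h where "h s = (\<Sum>n. T n g s)" for s
  have Qh: "Qop h s = (\<Sum>n. T (Suc n) g s)" if s: "s \<in> S" for s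
  proof -
    have "(\<Sum>t\<in>S. P s t * h t) = (\<Sum>t\<in>S. \<Sum>n. P s t * T n g t)"
      unfolding h_def using summ by (intro sum.cong refl suminf_mult[symmetric]) auto
    also have "\<dots> = (\<Sum>n. \<Sum>t\<in>S. P s t * T n g t)"
      using summ by (intro suminf_sum[symmetric] summable_mult) auto
    finally have A: "(\<Sum>t\<in>S. P s t * h t) = (\<Sum>n. \<Sum>t\<in>S. P s t * T n g t)" .
    have sA: "summable (\<lambda>n. \<Sum>t\<in>S. P s t * T n g t)"
      using summ by (intro summable_sum summable_mult) auto
    have "Qop h s = ((\<Sum>n. T n g s) + (\<Sum>n. \<Sum>t\<in>S. P s t * T n g t)) / 2"
      unfolding Qop_def A by (simp add: h_def)
    also have "\<dots> = (\<Sum>n. (T n g s + (\<Sum>t\<in>S. P s t * T n g t)) / 2)"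
      using summ[OF s] sA by (simp add: suminf_add suminf_divide summable_add)
    also have "\<dots> = (\<Sum>n. T (Suc n) g s)" by (simp add: TSuc Qop_def)
    finally show ?thesis .
  qed
  have hQ: "h s - Qop h s = g s" if s: "s \<in> S" for s
    using suminf_split_head[OF summ[OF s]] Qh[OF s] unfolding h_def by simp
  show ?thesis
  proof (intro exI[of _ "\<lambda>s. h s / 2"] ballI)
    fix s assume s: "s \<in> S"
    have "(\<Sum>t\<in>S. P s t * (h t / 2)) = (\<Sum>t\<in>S. P s t * h t) / 2" by (simp add: sum_divide_distrib)
    moreover have "h s / 2 - (\<Sum>t\<in>S. P s t * h t) / 2 = h s - (h s + (\<Sum>t\<in>S. P s t * h t)) / 2"
      by (simp add: field_simps)
    ultimately show "h s / 2 - (\<Sum>t\<in>S. P s t * (h t / 2)) = g s" using hQ[OF s] unfolding Qop_def by simp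
  qed
qed

end


locale mwalk =
  fixes S :: "'e::finite set" and P :: "'e \<Rightarrow> 'e \<Rightarrow> real" and \<mu> :: "'e \<Rightarrow> real"
    and M :: "'a measure" and X :: "nat \<Rightarrow> 'a \<Rightarrow> 'e"
  assumes M: "prob_space M"
    and Xm: "\<And>n. X n \<in> measurable M (count_space UNIV)"
    and cyl: "\<And>n s. n \<ge> 1 \<Longrightarrow> length s = n \<Longrightarrow>
       measure M {\<omega> \<in> space M. \<forall>i<n. X (Suc i) \<omega> = s ! i} = path_weight S P \<mu> s"
    and Prow: "\<And>s. s \<in> S \<Longrightarrow> (\<Sum>t\<in>S. P s t) = 1"
begin

sublocale prob_space M by (rule M)

definition L :: "nat \<Rightarrow> 'e list set" where "L n = {s. set s \<subseteq> S \<and> length s = n}"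

lemma finL: "finite (L n)"
  unfolding L_def by (rule finite_subset[OF _ finite_list_length[of n]]) auto

lemma Wset_eq: assumes "length s = n"
  shows "{\<omega> \<in> space M. walk X n \<omega> = s} = {\<omega> \<in> space M. \<forall>i<n. X (Suc i) \<omega> = s ! i}"
  using assms by (auto simp: walk_def list_eq_iff_nth_eq)

lemma Wset_sets: "{\<omega> \<in> space M. walk X n \<omega> = s} \<in> sets M"
proof (cases "length s = n")
  case True
  have one: "{\<omega> \<in> space M. X (Suc i) \<omega> = s ! i} \<in> sets M" for i
  proof -
    have "X (Suc i) -` {s ! i} \<inter> space M \<in> sets M" by (rule measurable_sets[OF Xm]) simp
    moreover have "X (Suc i) -` {s ! i} \<inter> space M = {\<omega> \<in> space M. X (Suc i) \<omega> = s ! i}" by auto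
    ultimately show ?thesis by simp
  qed
  have "{\<omega> \<in> space M. \<forall>i\<in>{..<n}. X (Suc i) \<omega> = s ! i} \<in> sets M"
    by (rule sets.sets_Collect_finite_All[OF one]) simp
  then have "{\<omega> \<in> space M. \<forall>i<n. X (Suc i) \<omega> = s ! i} \<in> sets M" unfolding Ball_def lessThan_iff .
  then show ?thesis unfolding Wset_eq[OF True] .
next
  case False
  have "length (walk X n \<omega>) = n" for \<omega> by (simp add: walk_def)
  then have "{\<omega> \<in> space M. walk X n \<omega> = s} = {}" using False by auto
  then show ?thesis by (metis sets.empty_sets)
qed

lemma walk_meas: "walk X n \<in> measurable M (count_space UNIV)"
proof -
  have "(walk X n -` {a} \<inter> space M) \<in> sets M" for a
    using Wset_sets[of n a] by (simp add: vimage_def Int_def conj_commute)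
  then show ?thesis by (subst measurable_count_space_eq_countable) auto
qed

lemma Wprob: "n \<ge> 1 \<Longrightarrow> length s = n \<Longrightarrow> prob {\<omega> \<in> space M. walk X n \<omega> = s} = path_weight S P \<mu> s"
  using Wset_eq[of s n] cyl[of n s] by simp

lemma pw_zero: "\<not> set s \<subseteq> S \<Longrightarrow> path_weight S P m s = 0"
  by (simp add: path_weight_def)

lemma fin_em: "emeasure M A < top"
  using emeasure_finite[of A] by (simp add: less_top[symmetric])

lemma pw_nz: "path_weight S P m s \<noteq> 0 \<Longrightarrow> set s \<subseteq> S"
  using pw_zero by blast

lemma expect:
  assumes n: "n \<ge> 1"
  shows "integrable M (\<lambda>\<omega>. F (walk X n \<omega>))"
    and "(\<integral>\<omega>. F (walk X n \<omega>) \<partial>M) = (\<Sum>s\<in>L n. F s * path_weight S P \<mu> s)"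
proof -
  define A where "A = {s :: 'e list. length s = n}"
  have finA: "finite A" unfolding A_def by (rule finite_list_length)
  have eq: "F (walk X n \<omega>) = (\<Sum>s\<in>A. F s * indicator {\<omega> \<in> space M. walk X n \<omega> = s} \<omega>)"
    if "\<omega> \<in> space M" for \<omega>
  proof -
    have "(\<Sum>s\<in>A. F s * indicator {\<omega> \<in> space M. walk X n \<omega> = s} \<omega>) = (\<Sum>s\<in>A. if s = walk X n \<omega> then F (walk X n \<omega>) else 0)"
      using that by (intro sum.cong) (auto simp: indicator_def)
    also have "\<dots> = F (walk X n \<omega>)" using finA by (simp add: A_def walk_def)
    finally show ?thesis by simp
  qed
  have int: "integrable M (\<lambda>\<omega>. \<Sum>s\<in>A. F s * indicator {\<omega> \<in> space M. walk X n \<omega> = s} \<omega>)"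
    by (intro Bochner_Integration.integrable_sum) (simp add: Wset_sets fin_em)
  show "integrable M (\<lambda>\<omega>. F (walk X n \<omega>))"
  proof -
    have "integrable M (\<lambda>\<omega>. F (walk X n \<omega>)) = integrable M (\<lambda>\<omega>. \<Sum>s\<in>A. F s * indicator {\<omega> \<in> space M. walk X n \<omega> = s} \<omega>)"
      by (rule Bochner_Integration.integrable_cong) (auto simp: eq)
    then show ?thesis using int by simp
  qed
  have "(\<integral>\<omega>. F (walk X n \<omega>) \<partial>M) = (\<integral>\<omega>. (\<Sum>s\<in>A. F s * indicator {\<omega> \<in> space M. walk X n \<omega> = s} \<omega>) \<partial>M)"
    by (rule Bochner_Integration.integral_cong) (auto simp: eq)
  also have "\<dots> = (\<Sum>s\<in>A. F s * prob {\<omega> \<in> space M. walk X n \<omega> = s})"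
  proof -
    have "(\<integral>\<omega>. (\<Sum>s\<in>A. F s * indicator {\<omega> \<in> space M. walk X n \<omega> = s} \<omega>) \<partial>M)
        = (\<Sum>s\<in>A. (\<integral>\<omega>. F s * indicator {\<omega> \<in> space M. walk X n \<omega> = s} \<omega> \<partial>M))"
      by (rule Bochner_Integration.integral_sum) (simp add: Wset_sets fin_em)
    also have "\<dots> = (\<Sum>s\<in>A. F s * prob {\<omega> \<in> space M. walk X n \<omega> = s})"
    proof (rule sum.cong[OF refl])
      fix s
      have "{\<omega> \<in> space M. walk X n \<omega> = s} \<inter> space M = {\<omega> \<in> space M. walk X n \<omega> = s}" by auto
      then show "(\<integral>\<omega>. F s * indicator {\<omega> \<in> space M. walk X n \<omega> = s} \<omega> \<partial>M) = F s * prob {\<omega> \<in> space M. walk X n \<omega> = s}"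
        by (simp add: Bochner_Integration.integral_indicator)
    qed
    finally show ?thesis .
  qed
  also have "\<dots> = (\<Sum>s\<in>A. F s * path_weight S P \<mu> s)"
    using Wprob[OF n] by (simp add: A_def)
  also have "\<dots> = (\<Sum>s\<in>L n. F s * path_weight S P \<mu> s)"
  proof (rule sum.mono_neutral_right[OF finA])
    show "L n \<subseteq> A" by (auto simp: A_def L_def)
    show "\<forall>s\<in>A - L n. F s * path_weight S P \<mu> s = 0"
    proof
      fix s assume "s \<in> A - L n"
      then have "\<not> set s \<subseteq> S" by (auto simp: A_def L_def)
      then show "F s * path_weight S P \<mu> s = 0" by (simp add: pw_zero)
    qed
  qed
  finally show "(\<integral>\<omega>. F (walk X n \<omega>) \<partial>M) = (\<Sum>s\<in>L n. F s * path_weight S P \<mu> s)" .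
qed


lemma walk_take: "i \<le> j \<Longrightarrow> take i (walk X j \<omega>) = walk X i \<omega>"
  by (simp add: walk_def take_map)

lemma walk_Suc: "walk X (Suc n) \<omega> = walk X n \<omega> @ [X (Suc n) \<omega>]"
  by (simp add: walk_def)

lemma walk_len[simp]: "length (walk X n \<omega>) = n"
  by (simp add: walk_def)

lemma walk_last: "n \<ge> 1 \<Longrightarrow> last (walk X n \<omega>) = X n \<omega>"
  by (cases n) (auto simp: walk_Suc)

lemma pw_snoc:
  assumes "s \<noteq> []" "set s \<subseteq> S" "t \<in> S"
  shows "path_weight S P m (s @ [t]) = path_weight S P m s * P (last s) t"
proof -
  obtain k where k: "length s = Suc k" using assms(1) by (cases s) auto
  have "(\<Prod>i<length (s @ [t]) - 1. P ((s @ [t]) ! i) ((s @ [t]) ! Suc i))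
      = (\<Prod>i<Suc k. P ((s @ [t]) ! i) ((s @ [t]) ! Suc i))" using k by simp
  also have "\<dots> = (\<Prod>i<k. P ((s @ [t]) ! i) ((s @ [t]) ! Suc i)) * P ((s @ [t]) ! k) ((s @ [t]) ! Suc k)"
    by simp
  also have "(\<Prod>i<k. P ((s @ [t]) ! i) ((s @ [t]) ! Suc i)) = (\<Prod>i<length s - 1. P (s ! i) (s ! Suc i))"
    using k by (intro prod.cong) (auto simp: nth_append)
  also have "P ((s @ [t]) ! k) ((s @ [t]) ! Suc k) = P (last s) t"
    using k assms(1) by (simp add: nth_append last_conv_nth)
  finally show ?thesis using assms by (simp add: path_weight_def)
qed

lemma L_Suc: "L (Suc n) = (\<lambda>(s, t). s @ [t]) ` (L n \<times> S)"
proof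
  show "L (Suc n) \<subseteq> (\<lambda>(s, t). s @ [t]) ` (L n \<times> S)"
  proof
    fix x assume x: "x \<in> L (Suc n)"
    then have "x \<noteq> []" by (auto simp: L_def)
    then have "x = butlast x @ [last x]" by simp
    moreover have "butlast x \<in> L n" "last x \<in> S" using x \<open>x \<noteq> []\<close>
      by (auto simp: L_def dest: in_set_butlastD)
    ultimately show "x \<in> (\<lambda>(s, t). s @ [t]) ` (L n \<times> S)" by (auto intro!: image_eqI[where x="(butlast x, last x)"])
  qed
qed (auto simp: L_def)

lemma sum_L_Suc: "(\<Sum>s\<in>L (Suc n). G s) = (\<Sum>s\<in>L n. \<Sum>t\<in>S. G (s @ [t]))"
proof -
  have inj: "inj_on (\<lambda>(s, t). s @ [t]) (L n \<times> S)" by (auto simp: inj_on_def)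
  have "(\<Sum>s\<in>L (Suc n). G s) = (\<Sum>p\<in>L n \<times> S. G ((\<lambda>(s, t). s @ [t]) p))"
    unfolding L_Suc by (rule sum.reindex[OF inj, unfolded comp_def])
  also have "\<dots> = (\<Sum>s\<in>L n. \<Sum>t\<in>S. G (s @ [t]))"
    unfolding sum.cartesian_product by (rule sum.cong) auto
  finally show ?thesis .
qed

lemma orth:
  assumes cond: "\<And>m s. m \<ge> 1 \<Longrightarrow> s \<in> L m \<Longrightarrow> (\<Sum>t\<in>S. P (last s) t * F (s @ [t])) = 0"
    and ij: "1 \<le> i" "i < j"
  shows "(\<integral>\<omega>. F (walk X i \<omega>) * F (walk X j \<omega>) \<partial>M) = 0"
proof -
  obtain m where m: "j = Suc m" using ij by (cases j) auto
  have im: "i \<le> m" "m \<ge> 1" using ij m by auto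
  have "(\<integral>\<omega>. F (walk X i \<omega>) * F (walk X j \<omega>) \<partial>M) = (\<integral>\<omega>. (\<lambda>s. F (take i s) * F s) (walk X j \<omega>) \<partial>M)"
    using ij by (simp add: walk_take)
  also have "\<dots> = (\<Sum>s\<in>L j. F (take i s) * F s * path_weight S P \<mu> s)"
    using ij by (subst expect(2)) auto
  also have "\<dots> = (\<Sum>s\<in>L m. \<Sum>t\<in>S. F (take i (s @ [t])) * F (s @ [t]) * path_weight S P \<mu> (s @ [t]))"
    unfolding m by (rule sum_L_Suc)
  also have "\<dots> = (\<Sum>s\<in>L m. F (take i s) * path_weight S P \<mu> s * (\<Sum>t\<in>S. P (last s) t * F (s @ [t])))"
  proof (rule sum.cong[OF refl])
    fix s assume s: "s \<in> L m"
    then have sne: "s \<noteq> []" "set s \<subseteq> S" "length s = m" using im by (auto simp: L_def)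
    show "(\<Sum>t\<in>S. F (take i (s @ [t])) * F (s @ [t]) * path_weight S P \<mu> (s @ [t]))
        = F (take i s) * path_weight S P \<mu> s * (\<Sum>t\<in>S. P (last s) t * F (s @ [t]))"
      unfolding sum_distrib_left
      by (intro sum.cong refl) (use sne im in \<open>simp add: pw_snoc\<close>)
  qed
  also have "\<dots> = 0" using cond im by simp
  finally show ?thesis .
qed

lemma AE_inS: "AE \<omega> in M. \<forall>m. m \<ge> 1 \<longrightarrow> X m \<omega> \<in> S"
proof (subst AE_all_countable, intro allI)
  fix m :: nat
  show "AE \<omega> in M. m \<ge> 1 \<longrightarrow> X m \<omega> \<in> S"
  proof (cases "m \<ge> 1")
    case False then show ?thesis by simp
  next
    case True
    define F where "F s = (if last s \<in> S then 0 else 1 :: real)" for s :: "'e list"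
    have "(\<integral>\<omega>. F (walk X m \<omega>) \<partial>M) = (\<Sum>s\<in>L m. F s * path_weight S P \<mu> s)" by (rule expect(2)[OF True])
    also have "\<dots> = 0"
    proof (intro sum.neutral ballI)
      fix s assume "s \<in> L m"
      then have "last s \<in> S" using True by (cases s) (auto simp: L_def)
      then show "F s * path_weight S P \<mu> s = 0" by (simp add: F_def)
    qed
    finally have "(\<integral>\<omega>. F (walk X m \<omega>) \<partial>M) = 0" .
    then have "AE \<omega> in M. F (walk X m \<omega>) = 0"
      using expect(1)[OF True, of F] by (subst integral_nonneg_eq_0_iff_AE[symmetric]) (auto simp: F_def)
    then show ?thesis by eventually_elim (use True in \<open>auto simp: F_def walk_last split: if_splits\<close>)
  qed
qed

lemma mg_avg:
  assumes cond: "\<And>m s. m \<ge> 1 \<Longrightarrow> s \<in> L m \<Longrightarrow> (\<Sum>t\<in>S. P (last s) t * F (s @ [t])) = 0"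
    and bnd: "\<And>s. \<bar>F s\<bar> \<le> c"
  shows "AE \<omega> in M. (\<lambda>n. (\<Sum>j\<in>{1..n}. F (walk X j \<omega>)) / real n) \<longlonglongrightarrow> 0"
proof -
  define D where "D m \<omega> = F (walk X (Suc m) \<omega>)" for m \<omega>
  have Dm: "D m \<in> borel_measurable M" for m
    unfolding D_def by (rule measurable_compose[OF walk_meas]) simp
  have Dorth: "(\<integral>x. D i x * D j x \<partial>M) = 0" if "i \<noteq> j" for i j
  proof (cases "i < j")
    case True then show ?thesis unfolding D_def by (intro orth[OF cond]) auto
  next
    case False
    then have "j < i" using that by simp
    then have "(\<integral>x. D j x * D i x \<partial>M) = 0" unfolding D_def by (intro orth[OF cond]) auto
    then show ?thesis by (simp add: mult.commute)
  qed
  have "AE x in M. (\<lambda>n. (\<Sum>m<n. D m x) / real n) \<longlonglongrightarrow> 0"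
    by (rule mslln[where c=c, OF Dm _ Dorth]) (auto simp: D_def bnd)
  moreover have "(\<Sum>m<n. D m x) = (\<Sum>j\<in>{1..n}. F (walk X j x))" for n x
    unfolding D_def by (induction n) (simp_all add: atLeastAtMostSuc_conv)
  ultimately show ?thesis by simp
qed

end


lemma lim_aux:
  fixes x y :: "nat \<Rightarrow> real"
  assumes y: "y \<longlonglongrightarrow> 0" and b: "\<And>n. n \<ge> 1 \<Longrightarrow> \<bar>x n - L - y n\<bar> \<le> C / real n"
  shows "x \<longlonglongrightarrow> L"
proof -
  have "(\<lambda>n. x n - L - y n) \<longlonglongrightarrow> 0"
  proof (rule Lim_null_comparison)
    show "\<forall>\<^sub>F n in sequentially. norm (x n - L - y n) \<le> C / real n"
      using b by (auto simp: eventually_sequentially intro!: exI[of _ 1])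
    show "(\<lambda>n. C / real n) \<longlonglongrightarrow> 0" by (rule lim_const_over_n)
  qed
  from tendsto_add[OF tendsto_add[OF this y] tendsto_const[of L]] show ?thesis by simp
qed

definition G :: "'e list \<Rightarrow> 'e list \<Rightarrow> real" where
  "G w s = (if drop (length s - length w) s = w then 1 else 0)"

lemma G_snoc: "G (w @ [b]) (s @ [t]) = G w s * (if t = b then 1 else 0)"
proof -
  have "drop (length s - length w) (s @ [t]) = drop (length s - length w) s @ [t]" by simp
  then show ?thesis unfolding G_def by auto
qed

lemma G_last: "G w s \<noteq> 0 \<Longrightarrow> w \<noteq> [] \<Longrightarrow> last s = last w"
  unfolding G_def by (metis drop_all last_drop not_less)

lemma G_nil: "w \<noteq> [] \<Longrightarrow> G w [] = 0" by (simp add: G_def)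

lemma G_bnd: "\<bar>G w s\<bar> \<le> 1" by (simp add: G_def)

locale mwalk_irr = mwalk S P \<mu> M X
  for S :: "'e::finite set" and P \<mu> and M :: "'a measure" and X +
  assumes Pnn: "\<And>s t. s \<in> S \<Longrightarrow> t \<in> S \<Longrightarrow> P s t \<ge> 0"
    and neS: "S \<noteq> {}"
    and irr: "\<And>s t. s \<in> S \<Longrightarrow> t \<in> S \<Longrightarrow> (s, t) \<in> {(a, b). a \<in> S \<and> b \<in> S \<and> P a b > 0}\<^sup>+"
begin

sublocale C: mc S P
  by unfold_locales (use finite Pnn Prow neS irr in auto)

definition cnt :: "'e list \<Rightarrow> nat \<Rightarrow> 'a \<Rightarrow> real" where
  "cnt w n \<omega> = (\<Sum>m\<in>{1..n}. G w (walk X m \<omega>))"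


lemma walk_butlast: "butlast (walk X (Suc n) \<omega>) = walk X n \<omega>"
  by (simp add: walk_Suc)

lemma finite_range_bound: "\<exists>c. \<forall>x::'e. \<bar>f x\<bar> \<le> (c::real)"
proof -
  have "\<forall>x. \<bar>f x\<bar> \<le> Max (range (\<lambda>x. \<bar>f x\<bar>))" by (auto intro: Max_ge)
  then show ?thesis by blast
qed

lemma freq_base:
  assumes a: "a \<in> S"
  shows "AE \<omega> in M. (\<lambda>n. cnt [a] n \<omega> / real n) \<longlonglongrightarrow> C.pi a"
proof -
  define g where "g x = C.ind a x - C.pi a" for x
  have g0: "(\<Sum>u\<in>S. g u * C.pi u) = 0"
  proof -
    have "(\<Sum>u\<in>S. g u * C.pi u) = (\<Sum>u\<in>S. C.ind a u * C.pi u) - C.pi a * (\<Sum>u\<in>S. C.pi u)"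
      by (simp add: g_def algebra_simps sum_subtractf sum_distrib_left)
    also have "(\<Sum>u\<in>S. C.ind a u * C.pi u) = (\<Sum>u\<in>S. if u = a then C.pi a else 0)"
      by (intro sum.cong) (auto simp: C.ind_def)
    also have "\<dots> = C.pi a" using a by simp
    finally show ?thesis using C.pi_sum by simp
  qed
  obtain H where H: "\<And>s. s \<in> S \<Longrightarrow> H s - (\<Sum>t\<in>S. P s t * H t) = g s"
    using C.poisson[OF g0] by blast
  define PH where "PH x = (\<Sum>t\<in>S. P x t * H t)" for x
  define F where "F s = (if length s \<ge> 2 then H (last s) - PH (last (butlast s)) else 0)" for s :: "'e list"
  obtain c1 where c1: "\<And>x. \<bar>H x\<bar> \<le> c1" using finite_range_bound by blast
  obtain c2 where c2: "\<And>x. \<bar>PH x\<bar> \<le> c2" using finite_range_bound by blast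
  have Fb: "\<bar>F s\<bar> \<le> c1 + c2" for s
  proof -
    have "0 \<le> c1" "0 \<le> c2" using c1[of undefined] c2[of undefined] by auto
    then show ?thesis using c1[of "last s"] c2[of "last (butlast s)"] unfolding F_def by auto
  qed
  have cond: "(\<Sum>t\<in>S. P (last s) t * F (s @ [t])) = 0" if "m \<ge> 1" "s \<in> L m" for m s
  proof -
    have s1: "s \<noteq> []" "set s \<subseteq> S" using that by (auto simp: L_def)
    then have s: "s \<noteq> []" "last s \<in> S" using last_in_set by auto
    have "(\<Sum>t\<in>S. P (last s) t * F (s @ [t])) = (\<Sum>t\<in>S. P (last s) t * H t - P (last s) t * PH (last s))"
      using s by (intro sum.cong refl) (auto simp: F_def algebra_simps Suc_le_eq)
    also have "\<dots> = (\<Sum>t\<in>S. P (last s) t * H t) - (\<Sum>t\<in>S. P (last s) t) * PH (last s)"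
      by (simp add: sum_subtractf sum_distrib_right)
    also have "\<dots> = PH (last s) - PH (last s) * (\<Sum>t\<in>S. P (last s) t)"
      by (simp add: PH_def)
    also have "\<dots> = 0" using Prow[OF s(2)] by simp
    finally show ?thesis .
  qed
  have mg: "AE \<omega> in M. (\<lambda>n. (\<Sum>j\<in>{1..n}. F (walk X j \<omega>)) / real n) \<longlonglongrightarrow> 0"
    by (rule mg_avg[OF cond Fb])
  show ?thesis
    using mg AE_inS
  proof (eventually_elim)
    case (elim \<omega>)
    have inS: "X m \<omega> \<in> S" if "m \<ge> 1" for m using elim(2) that by blast
    have G1: "G [a] (walk X m \<omega>) = C.ind a (X m \<omega>)" if m1: "m \<ge> 1" for m
    proof -
      obtain k where k: "m = Suc k" using m1 by (cases m) auto
      show ?thesis unfolding k walk_Suc G_def by (auto simp: C.ind_def)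
    qed
    have ident: "cnt [a] n \<omega> - real n * C.pi a = H (X 1 \<omega>) - PH (X n \<omega>) + (\<Sum>j\<in>{1..n}. F (walk X j \<omega>))"
      if "n \<ge> 1" for n
      using that
    proof (induction n rule: dec_induct)
      case base
      have "cnt [a] 1 \<omega> - C.pi a = g (X 1 \<omega>)" by (simp add: cnt_def G1 g_def)
      also have "\<dots> = H (X 1 \<omega>) - PH (X 1 \<omega>)" using H[OF inS[of 1]] by (simp add: PH_def)
      finally show ?case by (simp add: F_def)
    next
      case (step n)
      have "cnt [a] (Suc n) \<omega> = cnt [a] n \<omega> + G [a] (walk X (Suc n) \<omega>)" by (simp add: cnt_def)
      moreover have "G [a] (walk X (Suc n) \<omega>) - C.pi a = H (X (Suc n) \<omega>) - PH (X (Suc n) \<omega>)"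
        using H[OF inS[of "Suc n"]] G1[of "Suc n"] by (simp add: PH_def g_def)
      moreover have "F (walk X (Suc n) \<omega>) = H (X (Suc n) \<omega>) - PH (X n \<omega>)"
        using step(1) by (simp add: F_def walk_last walk_butlast)
      moreover have "(\<Sum>j\<in>{1..Suc n}. F (walk X j \<omega>)) = (\<Sum>j\<in>{1..n}. F (walk X j \<omega>)) + F (walk X (Suc n) \<omega>)"
        by simp
      moreover have "real (Suc n) * C.pi a = real n * C.pi a + C.pi a" by (simp add: algebra_simps)
      ultimately show ?case using step(3) by linarith
    qed
    show ?case
    proof (rule lim_aux[OF elim(1)])
      fix n :: nat assume n: "n \<ge> 1"
      have "cnt [a] n \<omega> / real n - C.pi a - (\<Sum>j\<in>{1..n}. F (walk X j \<omega>)) / real n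
          = (cnt [a] n \<omega> - real n * C.pi a - (\<Sum>j\<in>{1..n}. F (walk X j \<omega>))) / real n"
        using n by (simp add: diff_divide_distrib)
      also have "\<dots> = (H (X 1 \<omega>) - PH (X n \<omega>)) / real n" using ident[OF n] by simp
      finally have eq: "cnt [a] n \<omega> / real n - C.pi a - (\<Sum>j\<in>{1..n}. F (walk X j \<omega>)) / real n = (H (X 1 \<omega>) - PH (X n \<omega>)) / real n" .
      have "\<bar>H (X 1 \<omega>) - PH (X n \<omega>)\<bar> \<le> c1 + c2" using c1[of "X 1 \<omega>"] c2[of "X n \<omega>"] by linarith
      then show "\<bar>cnt [a] n \<omega> / real n - C.pi a - (\<Sum>j\<in>{1..n}. F (walk X j \<omega>)) / real n\<bar> \<le> (c1 + c2) / real n"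
        unfolding eq abs_divide using n by (simp add: divide_right_mono)
    qed
  qed
qed


lemma freq_step:
  assumes w: "w \<noteq> []" "set w \<subseteq> S" "b \<in> S"
    and IH: "AE \<omega> in M. (\<lambda>n. cnt w n \<omega> / real n) \<longlonglongrightarrow> path_weight S P C.pi w"
  shows "AE \<omega> in M. (\<lambda>n. cnt (w @ [b]) n \<omega> / real n) \<longlonglongrightarrow> path_weight S P C.pi (w @ [b])"
proof -
  define p where "p = P (last w) b"
  define F where "F s = G (w @ [b]) s - p * G w (butlast s)" for s
  have Fb: "\<bar>F s\<bar> \<le> 1 + \<bar>p\<bar>" for s
  proof -
    have "\<bar>p * G w (butlast s)\<bar> \<le> \<bar>p\<bar>" using G_bnd[of w "butlast s"] by (simp add: abs_mult mult_left_le)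
    then show ?thesis using G_bnd[of "w @ [b]" s] unfolding F_def by linarith
  qed
  have cond: "(\<Sum>t\<in>S. P (last s) t * F (s @ [t])) = 0" if "m \<ge> 1" "s \<in> L m" for m s
  proof -
    have s1: "s \<noteq> []" "set s \<subseteq> S" using that by (auto simp: L_def)
    then have ls: "last s \<in> S" using last_in_set by auto
    have "(\<Sum>t\<in>S. P (last s) t * F (s @ [t])) = (\<Sum>t\<in>S. G w s * (if t = b then P (last s) t else 0) - p * G w s * P (last s) t)"
      by (intro sum.cong refl) (auto simp: F_def G_snoc algebra_simps)
    also have "\<dots> = G w s * P (last s) b - p * G w s * (\<Sum>t\<in>S. P (last s) t)"
      using w(3) by (simp add: sum_subtractf sum_distrib_left[symmetric] sum.delta)
    also have "\<dots> = G w s * (P (last s) b - p)" using Prow[OF ls] by (simp add: algebra_simps)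
    also have "\<dots> = 0"
    proof (cases "G w s = 0")
      case False
      then have "last s = last w" using G_last w(1) by blast
      then show ?thesis by (simp add: p_def)
    qed simp
    finally show ?thesis .
  qed
  have mg: "AE \<omega> in M. (\<lambda>n. (\<Sum>j\<in>{1..n}. F (walk X j \<omega>)) / real n) \<longlonglongrightarrow> 0"
    by (rule mg_avg[OF cond Fb])
  have pwe: "path_weight S P C.pi (w @ [b]) = path_weight S P C.pi w * p"
    unfolding p_def by (rule pw_snoc[OF w])
  show ?thesis
    using mg IH
  proof (eventually_elim)
    case (elim \<omega>)
    have ident: "(\<Sum>j\<in>{1..n}. F (walk X j \<omega>)) = cnt (w @ [b]) n \<omega> - p * (cnt w n \<omega> - G w (walk X n \<omega>))" for n
    proof (induction n)
      case 0 then show ?case by (simp add: cnt_def walk_def G_nil[OF w(1)])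
    next
      case (Suc n)
      have "F (walk X (Suc n) \<omega>) = G (w @ [b]) (walk X (Suc n) \<omega>) - p * G w (walk X n \<omega>)"
        by (simp add: F_def walk_butlast)
      moreover have "cnt (w @ [b]) (Suc n) \<omega> = cnt (w @ [b]) n \<omega> + G (w @ [b]) (walk X (Suc n) \<omega>)"
        by (simp add: cnt_def)
      moreover have "cnt w (Suc n) \<omega> = cnt w n \<omega> + G w (walk X (Suc n) \<omega>)"
        by (simp add: cnt_def)
      moreover have "(\<Sum>j\<in>{1..Suc n}. F (walk X j \<omega>)) = (\<Sum>j\<in>{1..n}. F (walk X j \<omega>)) + F (walk X (Suc n) \<omega>)"
        by simp
      ultimately show ?case using Suc.IH by (simp add: algebra_simps)
    qed
    define y where "y n = (\<Sum>j\<in>{1..n}. F (walk X j \<omega>)) / real n + p * (cnt w n \<omega> / real n - path_weight S P C.pi w)" for n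
    have y: "y \<longlonglongrightarrow> 0"
    proof -
      have "(\<lambda>n. cnt w n \<omega> / real n - path_weight S P C.pi w) \<longlonglongrightarrow> 0"
        using tendsto_diff[OF elim(2) tendsto_const[of "path_weight S P C.pi w"]] by simp
      from tendsto_add[OF elim(1) tendsto_mult[OF tendsto_const[of p] this]] show ?thesis
        unfolding y_def by simp
    qed
    show ?case
    proof (rule lim_aux[OF y])
      fix n :: nat assume n: "n \<ge> 1"
      have "cnt (w @ [b]) n \<omega> / real n - path_weight S P C.pi (w @ [b]) - y n = - (p * G w (walk X n \<omega>)) / real n"
        unfolding y_def pwe using n ident[of n] by (simp add: field_simps)
      moreover have "\<bar>p * G w (walk X n \<omega>)\<bar> \<le> \<bar>p\<bar>" using G_bnd[of w "walk X n \<omega>"] by (simp add: abs_mult mult_left_le)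
      ultimately show "\<bar>cnt (w @ [b]) n \<omega> / real n - path_weight S P C.pi (w @ [b]) - y n\<bar> \<le> \<bar>p\<bar> / real n"
        using n by (simp add: abs_divide divide_right_mono)
    qed
  qed
qed

lemma freq:
  assumes v: "v \<noteq> []" "set v \<subseteq> S"
  shows "AE \<omega> in M. (\<lambda>n. cnt v n \<omega> / real n) \<longlonglongrightarrow> path_weight S P C.pi v"
proof -
  have "AE \<omega> in M. (\<lambda>n. cnt (take (Suc j) v) n \<omega> / real n) \<longlonglongrightarrow> path_weight S P C.pi (take (Suc j) v)"
    if "j < length v" for j
    using that
  proof (induction j)
    case 0
    have hv: "take (Suc 0) v = [hd v]" using v(1) by (cases v) auto
    have "hd v \<in> S" using v by (cases v) auto
    then have "AE \<omega> in M. (\<lambda>n. cnt [hd v] n \<omega> / real n) \<longlonglongrightarrow> C.pi (hd v)" by (rule freq_base)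
    moreover have "path_weight S P C.pi [hd v] = C.pi (hd v)" using \<open>hd v \<in> S\<close> by (simp add: path_weight_def)
    ultimately show ?case unfolding hv by simp
  next
    case (Suc j)
    have tk: "take (Suc (Suc j)) v = take (Suc j) v @ [v ! Suc j]" using Suc.prems by (simp add: take_Suc_conv_app_nth)
    have w: "take (Suc j) v \<noteq> []" "set (take (Suc j) v) \<subseteq> S" "v ! Suc j \<in> S"
      using v Suc.prems by (auto dest: in_set_takeD)
    show ?case unfolding tk by (rule freq_step[OF w Suc.IH]) (use Suc.prems in simp)
  qed
  from this[of "length v - 1"] v(1) show ?thesis by simp
qed

end


lemma sumG_card: "(\<Sum>m\<in>A. G v (f m)) = real (card {m\<in>A. drop (length (f m) - length v) (f m) = v})" if "finite A"
proof -
  have "(\<Sum>m\<in>A. G v (f m)) = (\<Sum>m\<in>{m\<in>A. drop (length (f m) - length v) (f m) = v}. 1)"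
    unfolding G_def using that by (simp add: sum.If_cases Int_def conj_commute)
  then show ?thesis by simp
qed

lemma cyc_lin:
  fixes W B v :: "'e list"
  assumes v: "v \<noteq> []"
  defines "Q \<equiv> {m\<in>{1..length W}. drop (m - length v) (take m W) = v}"
  shows "card Q \<le> cyc_occ (W @ B) v" "cyc_occ (W @ B) v \<le> card Q + length B + length v"
proof -
  define w where "w = W @ B"
  define N where "N = length W"
  define A where "A = {i. i < length w \<and> (\<forall>j<length v. w ! ((i + j) mod length w) = v ! j)}"
  have cyc: "cyc_occ (W @ B) v = card A" unfolding A_def w_def cyc_occ_def by simp
  have finA: "finite A" unfolding A_def by simp
  define f where "f m = m - length v" for m
  have Qm: "m \<ge> length v" if "m \<in> Q" for m
  proof (rule ccontr)
    assume "\<not> m \<ge> length v"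
    then have "m - length v = 0" by simp
    moreover have "length (take m W) < length v" using \<open>\<not> m \<ge> length v\<close> by simp
    ultimately show False using that unfolding Q_def by auto
  qed
  have inj: "inj_on f Q"
  proof (rule inj_onI)
    fix x y assume "x \<in> Q" "y \<in> Q" "f x = f y"
    then show "x = y" using Qm[of x] Qm[of y] unfolding f_def by linarith
  qed
  have img: "f ` Q = {i\<in>A. i + length v \<le> N}"
  proof
    show "f ` Q \<subseteq> {i\<in>A. i + length v \<le> N}"
    proof
      fix i assume "i \<in> f ` Q"
      then obtain m where m: "m \<in> Q" "i = m - length v" unfolding f_def by blast
      have mv: "m \<ge> length v" "m \<le> N" "drop i (take m W) = v" using Qm[OF m(1)] m unfolding Q_def N_def by auto
      have im: "i + length v = m" using mv m by simp
      have "w ! ((i + j) mod length w) = v ! j" if j: "j < length v" for j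
      proof -
        have lt: "i + j < N" "N \<le> length w" using im j mv unfolding w_def N_def by auto
        then have "(i + j) mod length w = i + j" by simp
        moreover have "w ! (i + j) = W ! (i + j)" using lt unfolding w_def N_def by (simp add: nth_append)
        moreover have "v ! j = (take m W) ! (i + j)" using mv(3)[symmetric] j im mv(2) unfolding N_def
          by (simp add: nth_drop)
        moreover have "(take m W) ! (i + j) = W ! (i + j)" using im j by simp
        ultimately show ?thesis by simp
      qed
      moreover have "i < length w" using im mv v unfolding w_def N_def by (cases v) auto
      ultimately show "i \<in> {i\<in>A. i + length v \<le> N}" using im mv unfolding A_def by auto
    qed
    show "{i\<in>A. i + length v \<le> N} \<subseteq> f ` Q"
    proof
      fix i assume i: "i \<in> {i\<in>A. i + length v \<le> N}"
      define m where "m = i + length v"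
      have mN: "m \<le> N" "m \<ge> 1" using i v unfolding m_def by (auto simp: Suc_le_eq)
      have "drop i (take m W) = v"
      proof (rule nth_equalityI)
        show "length (drop i (take m W)) = length v" using mN unfolding m_def N_def by simp
        fix j assume "j < length (drop i (take m W))"
        then have j: "j < length v" using mN unfolding m_def N_def by simp
        have lt: "i + j < N" "N \<le> length w" using j mN unfolding m_def w_def N_def by auto
        have "v ! j = w ! ((i + j) mod length w)" using i j unfolding A_def by auto
        also have "\<dots> = W ! (i + j)" using lt unfolding w_def N_def by (simp add: nth_append)
        also have "\<dots> = drop i (take m W) ! j" using lt j mN unfolding m_def N_def by simp
        finally show "drop i (take m W) ! j = v ! j" by simp
      qed
      then have "m \<in> Q" using mN unfolding Q_def m_def N_def by auto
      moreover have "i = f m" unfolding f_def m_def by simp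
      ultimately show "i \<in> f ` Q" by blast
    qed
  qed
  have cardQ: "card Q = card {i\<in>A. i + length v \<le> N}" using card_image[OF inj] img by simp
  show "card Q \<le> cyc_occ (W @ B) v" unfolding cardQ cyc using finA by (intro card_mono) auto
  have split: "A = {i\<in>A. i + length v \<le> N} \<union> {i\<in>A. \<not> i + length v \<le> N}" by auto
  have "card A \<le> card {i\<in>A. i + length v \<le> N} + card {i\<in>A. \<not> i + length v \<le> N}"
    by (subst split) (rule card_Un_le)
  also have "card {i\<in>A. \<not> i + length v \<le> N} \<le> card {N - length v ..< length w}"
    by (rule card_mono) (auto simp: A_def)
  also have "card {N - length v ..< length w} \<le> length B + length v" unfolding w_def N_def by simp
  finally show "cyc_occ (W @ B) v \<le> card Q + length B + length v" unfolding cyc cardQ by simp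
qed


context mwalk_irr begin
lemma cnt_card:
  assumes "v \<noteq> []"
  shows "cnt v (Suc n) \<omega> = real (card {m\<in>{1..length (walk X (Suc n) \<omega>)}. drop (m - length v) (take m (walk X (Suc n) \<omega>)) = v})"
proof -
  have "cnt v (Suc n) \<omega> = (\<Sum>m\<in>{1..Suc n}. G v (take m (walk X (Suc n) \<omega>)))"
    unfolding cnt_def by (intro sum.cong refl) (simp add: walk_take)
  also have "\<dots> = real (card {m\<in>{1..Suc n}. drop (length (take m (walk X (Suc n) \<omega>)) - length v) (take m (walk X (Suc n) \<omega>)) = v})"
    by (rule sumG_card) simp
  also have "{m\<in>{1..Suc n}. drop (length (take m (walk X (Suc n) \<omega>)) - length v) (take m (walk X (Suc n) \<omega>)) = v}
      = {m\<in>{1..length (walk X (Suc n) \<omega>)}. drop (m - length v) (take m (walk X (Suc n) \<omega>)) = v}"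
    by (rule Collect_cong) (auto simp: min_def)
  finally show ?thesis .
qed
end

theorem mainTheorem18:
  fixes orig :: "'e::finite \<Rightarrow> 'v::finite" and iv :: "'e \<Rightarrow> 'e" and N :: nat
    and S :: "'e set" and P :: "'e \<Rightarrow> 'e \<Rightarrow> real" and \<mu> :: "'e \<Rightarrow> real"
    and \<beta> :: "'e \<Rightarrow> 'e \<Rightarrow> 'e list"
    and M :: "'a measure" and X :: "nat \<Rightarrow> 'a \<Rightarrow> 'e"
  assumes "N \<ge> 2"
    and "chart orig iv N"
    and "gamma_based_chain orig iv S P"
    and "irreducible_chain S P"
    and "\<forall>s. s \<notin> S \<longrightarrow> \<mu> s = 0" and "\<forall>s\<in>S. \<mu> s \<ge> 0" and "(\<Sum>s\<in>S. \<mu> s) = 1"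
    and "closing_path_system orig iv \<beta>"
    and "prob_space M"
    and "\<forall>n. X n \<in> measurable M (count_space UNIV)"
    and "\<forall>n s. n \<ge> 1 \<longrightarrow> length s = n \<longrightarrow>
           measure M {\<omega> \<in> space M. \<forall>i<n. X (Suc i) \<omega> = s ! i} = path_weight S P \<mu> s"
  shows "(\<exists>C>0. \<forall>n\<ge>1. \<forall>\<omega>\<in>space M.
            real (length (closing \<beta> (walk X n \<omega>))) \<le> real n + C)
       \<and> (AE \<omega> in M. pcurr_converges orig iv
            (\<lambda>n. counting_current iv (closing \<beta> (walk X (Suc n) \<omega>)))
            (char_current iv S P))"
proof -
  note gb = assms(3)[unfolded gamma_based_chain_def]
  have neS: "S \<noteq> {}" using gb by auto
  have mw: "mwalk S P \<mu> M X"
    unfolding mwalk_def using assms(9,10,11) gb by auto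
  have ma: "mwalk_irr_axioms S P"
    unfolding mwalk_irr_axioms_def using gb neS assms(4) unfolding irreducible_chain_def by auto
  interpret W: mwalk_irr S P \<mu> M X by (intro mwalk_irr.intro mw ma)
  have pi_eq: "stationary_dist S P = W.C.pi"
    unfolding stationary_dist_def
  proof (rule the_equality)
    show "is_stationary S P W.C.pi"
    proof -
      have "\<forall>s. s \<notin> S \<longrightarrow> W.C.pi s = 0" by (simp add: W.C.pi_def)
      then show ?thesis unfolding is_stationary_def using W.C.pi_nn W.C.pi_sum W.C.pi_stat by auto
    qed
    fix m assume "is_stationary S P m"
    then show "m = W.C.pi" unfolding is_stationary_def by (intro W.C.stat_unique) auto
  qed
  define Cb where "Cb = Max (range (\<lambda>p. length (\<beta> (fst p) (snd p))))"
  have Cb: "length (\<beta> e e') \<le> Cb" for e e' unfolding Cb_def by (rule Max_ge) (auto intro: image_eqI[where x="(e, e')"])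
  have part1: "\<exists>C>0. \<forall>n\<ge>1. \<forall>\<omega>\<in>space M. real (length (closing \<beta> (walk X n \<omega>))) \<le> real n + C"
  proof (intro exI[of _ "real Cb + 1"] conjI allI impI ballI)
    fix n :: nat and \<omega> assume "n \<ge> 1" "\<omega> \<in> space M"
    have "length (closing \<beta> (walk X n \<omega>)) \<le> n + Cb" unfolding closing_def using Cb by (simp add: walk_def)
    then show "real (length (closing \<beta> (walk X n \<omega>))) \<le> real n + (real Cb + 1)" by linarith
  qed simp
  have key: "AE \<omega> in M. \<forall>v. v \<noteq> [] \<longrightarrow>
      (\<lambda>n. real (cyc_occ (closing \<beta> (walk X (Suc n) \<omega>)) v) / real (Suc n)) \<longlonglongrightarrow> path_weight S P W.C.pi v"
  proof (subst AE_all_countable, intro allI)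
    fix v :: "'e list"
    show "AE \<omega> in M. v \<noteq> [] \<longrightarrow> (\<lambda>n. real (cyc_occ (closing \<beta> (walk X (Suc n) \<omega>)) v) / real (Suc n)) \<longlonglongrightarrow> path_weight S P W.C.pi v"
    proof (cases "v = []")
      case True then show ?thesis by simp
    next
      case vne: False
      have fr: "AE \<omega> in M. (\<lambda>n. W.cnt v n \<omega> / real n) \<longlonglongrightarrow> path_weight S P W.C.pi v"
      proof (cases "set v \<subseteq> S")
        case True then show ?thesis using W.freq[OF vne] by simp
      next
        case False
        show ?thesis using W.AE_inS
        proof eventually_elim
          case (elim \<omega>)
          have "G v (walk X m \<omega>) = 0" for m
          proof (rule ccontr)
            assume "G v (walk X m \<omega>) \<noteq> 0"
            then have "drop (m - length v) (walk X m \<omega>) = v" by (simp add: G_def split: if_splits)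
            then have "set v \<subseteq> set (walk X m \<omega>)" by (metis set_drop_subset)
            moreover have "set (walk X m \<omega>) \<subseteq> S" using elim by (auto simp: walk_def)
            ultimately show False using False by blast
          qed
          then have "W.cnt v n \<omega> = 0" for n by (simp add: W.cnt_def)
          moreover have "path_weight S P W.C.pi v = 0" using False by (simp add: path_weight_def)
          ultimately show ?case by simp
        qed
      qed
      show ?thesis using fr
      proof eventually_elim
        case (elim \<omega>)
        have y: "(\<lambda>n. W.cnt v (Suc n) \<omega> / real (Suc n) - path_weight S P W.C.pi v) \<longlonglongrightarrow> 0"
          using tendsto_diff[OF LIMSEQ_Suc[OF elim] tendsto_const[of "path_weight S P W.C.pi v"]] by simp
        have "(\<lambda>n. real (cyc_occ (closing \<beta> (walk X (Suc n) \<omega>)) v) / real (Suc n)) \<longlonglongrightarrow> path_weight S P W.C.pi v"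
        proof (rule lim_aux[OF y])
          fix n :: nat assume n: "n \<ge> 1"
          define Wl where "Wl = walk X (Suc n) \<omega>"
          define Bl where "Bl = \<beta> (last Wl) (hd Wl)"
          have cl: "closing \<beta> Wl = Wl @ Bl" unfolding closing_def Bl_def by simp
          have cn: "W.cnt v (Suc n) \<omega> = real (card {m\<in>{1..length Wl}. drop (m - length v) (take m Wl) = v})"
            unfolding Wl_def by (rule W.cnt_card[OF vne])
          note cb = cyc_lin[OF vne, of Wl Bl]
          have d: "\<bar>real (cyc_occ (closing \<beta> Wl) v) - W.cnt v (Suc n) \<omega>\<bar> \<le> real (Cb + length v)"
            using cb Cb[of "last Wl" "hd Wl"] unfolding cl cn Bl_def by linarith
          have "\<bar>real (cyc_occ (closing \<beta> Wl) v) / real (Suc n) - path_weight S P W.C.pi v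
               - (W.cnt v (Suc n) \<omega> / real (Suc n) - path_weight S P W.C.pi v)\<bar>
              = \<bar>real (cyc_occ (closing \<beta> Wl) v) - W.cnt v (Suc n) \<omega>\<bar> / real (Suc n)"
            by (simp add: diff_divide_distrib[symmetric] abs_divide)
          also have "\<dots> \<le> real (Cb + length v) / real (Suc n)" using d by (simp add: divide_right_mono)
          also have "\<dots> \<le> real (Cb + length v) / real n" using n by (intro divide_left_mono) auto
          finally show "\<bar>real (cyc_occ (closing \<beta> (walk X (Suc n) \<omega>)) v) / real (Suc n) - path_weight S P W.C.pi v
               - (W.cnt v (Suc n) \<omega> / real (Suc n) - path_weight S P W.C.pi v)\<bar> \<le> real (Cb + length v) / real n"
            unfolding Wl_def .
        qed
        then show ?case by simp
      qed
    qed
  qed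
  have part2: "AE \<omega> in M. pcurr_converges orig iv
            (\<lambda>n. counting_current iv (closing \<beta> (walk X (Suc n) \<omega>)))
            (char_current iv S P)"
    using key
  proof eventually_elim
    case (elim \<omega>)
    show ?case unfolding pcurr_converges_def
    proof (intro exI[of _ "\<lambda>n. 1 / real (Suc n)"] conjI allI impI)
      fix v :: "'e list" assume v: "v \<noteq> [] \<and> reduced_path orig iv v"
      have iv: "inv_path iv v \<noteq> []" using v by (simp add: inv_path_def)
      have "(\<lambda>n. real (cyc_occ (closing \<beta> (walk X (Suc n) \<omega>)) v) / real (Suc n)
              + real (cyc_occ (closing \<beta> (walk X (Suc n) \<omega>)) (inv_path iv v)) / real (Suc n))
            \<longlonglongrightarrow> path_weight S P W.C.pi v + path_weight S P W.C.pi (inv_path iv v)"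
        using elim v iv by (intro tendsto_add) auto
      then show "(\<lambda>n. 1 / real (Suc n) * counting_current iv (closing \<beta> (walk X (Suc n) \<omega>)) v) \<longlonglongrightarrow> char_current iv S P v"
        unfolding counting_current_def char_current_def pi_eq by (simp add: add_divide_distrib)
    qed simp
  qed
  show ?thesis using part1 part2 by blast
qed


end
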